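(* Setting: integers $N,Q,S\ge1$, $1\le M\le N$, $J\ge1$; $\mathbf{H}\in\mathbb{R}^{Q\times N}\setminus\{\mathbf{0}\}$, $\mathbf{y}\in\mathbb{R}^Q$, a real matrix $\mathbf{V}_0$ with $N$ columns, and for $s\in\{1,\dots,S\}$: $P_s\ge1$, $\mathbf{V}_s\in\mathbb{R}^{P_s\times N}$, $\mathbf{c}_s\in\mathbb{R}^{P_s}$; $\Phi:\mathbb{R}^Q\to\mathbb{R}$; functions $\psi_{s,\delta}:\mathbb{R}\to\mathbb{R}$ for $\delta>0$; $F_\delta(\mathbf{x})=\Phi(\mathbf{H}\mathbf{x}-\mathbf{y})+\sum_{s=1}^S\psi_{s,\delta}(\|\mathbf{V}_s\mathbf{x}-\mathbf{c}_s\|)+\|\mathbf{V}_0\mathbf{x}\|^2$. Assume: (A1i) $\Phi$ is continuous and coercive; (A1ii) for every $\delta>0$ and $s$, $\psi_{s,\delta}$ is continuous and nonnegative; (A1iii) $\operatorname{Ker}\mathbf{H}\cap\operatorname{Ker}\mathbf{V}_0=\{\mathbf{0}\}$. Fix $\delta>0$ and assume: (A3i) $\Phi$ is differentiable with $L$-Lipschitz gradient; (A3ii) each $\psi_{s,\delta}$ is differentiable; (A3iii) each $t\mapsto\psi_{s,\delta}(\sqrt t)$ is concave on $[0,+\infty)$; (A3iv) for each $s$ there is $\overline\omega_s\in[0,+\infty)$ with $0\le\dot\psi_{s,\delta}(t)\le\overline\omega_s t$ for all $t>0$, and $\lim_{t\to0}\dot\psi_{s,\delta}(t)/t\in\mathbb{R}$.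 Assume moreover that $F_\delta$ satisfies the Kurdyka–Łojasiewicz inequality. Let $\omega_{s,\delta}(t)=\dot\psi_{s,\delta}(t)/t$, extended by continuity at $0$, fix $\mu\in[L,+\infty)$ and set $\mathbf{A}(\mathbf{x})=\mu\mathbf{H}^\top\mathbf{H}+2\mathbf{V}_0^\top\mathbf{V}_0+\mathbf{V}^\top\operatorname{Diag}\{\mathbf{b}(\mathbf{x})\}\mathbf{V}$, where $\mathbf{V}=[\mathbf{V}_1^\top|\cdots|\mathbf{V}_S^\top]^\top$ and $b_{P_1+\dots+P_{s-1}+p}(\mathbf{x})=\omega_{s,\delta}(\|\mathbf{V}_s\mathbf{x}-\mathbf{c}_s\|)$ for $p\in\{1,\dots,P_s\}$. Consider the MM subspace iteration: $\mathbf{x}_0\in\mathbb{R}^N$; for each $k\in\mathbb{N}$, given a matrix $\mathbf{D}_k\in\mathbb{R}^{N\times M}$, set $\mathbf{u}_k^0=\mathbf{0}$ and for $j=1,\dots,J$: $\mathbf{B}_k^{j-1}=\mathbf{D}_k^\top\mathbf{A}(\mathbf{x}_k+\mathbf{D}_k\mathbf{u}_k^{j-1})\mathbf{D}_k$, $\mathbf{u}_k^j=\mathbf{u}_k^{j-1}-(\mathbf{B}_k^{j-1})^{\dagger}\mathbf{D}_k^\top\nabla F_\delta(\mathbf{x}_k+\mathbf{D}_k\mathbf{u}_k^{j-1})$ (pseudo-inverse $\dagger$); then $\mathbf{x}_{k+1}=\mathbf{x}_k+\mathbf{D}_k\mathbf{u}_k^J$. Let $\mathbf{g}_k=\nabla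 F_\delta(\mathbf{x}_k)$ and assume (A4) there exist $\gamma_0>0,\gamma_1>0$ such that for every $k$ the first column $\mathbf{d}_k^1$ of $\mathbf{D}_k$ satisfies $\mathbf{g}_k^\top\mathbf{d}_k^1\le-\gamma_0\|\mathbf{g}_k\|^2$ and $\|\mathbf{d}_k^1\|\le\gamma_1\|\mathbf{g}_k\|$. Claim: the sequence $(\mathbf{x}_k)_{k\in\mathbb{N}}$ converges to a critical point $\tilde{\mathbf{x}}$ of $F_\delta$ (i.e. $\nabla F_\delta(\tilde{\mathbf{x}})=\mathbf{0}$), and it has finite length: $\sum_{k=0}^{+\infty}\|\mathbf{x}_{k+1}-\mathbf{x}_k\|<+\infty$.
   Context: $\|\cdot\|$ is the Euclidean norm; $\dot\psi_{s,\delta}$ is the derivative of $\psi_{s,\delta}$. A differentiable function $G:\mathbb{R}^N\to\mathbb{R}$ satisfies the Kurdyka–Łojasiewicz inequality if for every $\tilde{\mathbf{x}}\in\mathbb{R}^N$ and every bounded neighborhood $E$ of $\tilde{\mathbf{x}}$ there exist constants $\kappa>0$, $\zeta>0$ and $\theta\in[0,1)$ such that $\|\nabla G(\mathbf{x})\|\ge\kappa|G(\mathbf{x})-G(\tilde{\mathbf{x}})|^\theta$ for every $\mathbf{x}\in E$ with $|G(\mathbf{x})-G(\tilde{\mathbf{x}})|<\zeta$. *)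

theory Defs
  imports "HOL-Analysis.Analysis"
begin

text \<open>Gradient of a real-valued function on a Euclidean space (unique when it exists).\<close>
definition grad :: "('a::real_inner \<Rightarrow> real) \<Rightarrow> 'a \<Rightarrow> 'a" where
  "grad f x = (THE D. GDERIV f x :> D)"

text \<open>Coercivity: f(z) tends to +infinity as norm z tends to infinity.\<close>
definition coercive :: "('a::real_normed_vector \<Rightarrow> real) \<Rightarrow> bool" where
  "coercive f \<longleftrightarrow> filterlim f at_top at_infinity"

text \<open>Moore--Penrose pseudo-inverse of a square real matrix.\<close>
definition pinv :: "real^'m^'m \<Rightarrow> real^'m^'m" where
  "pinv B = (THE X. B ** X ** B = B \<and> X ** B ** X = X \<and>
                    transpose (B ** X) = B ** X \<and> transpose (X ** B) = X ** B)"

text \<open>Diagonal matrix Diag{b}.\<close>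
definition Diag :: "real^'p \<Rightarrow> real^'p^'p" where
  "Diag b = (\<chi> i j. if i = j then b $ i else 0)"

text \<open>Kurdyka--Lojasiewicz inequality, as in the paper's context.
  A neighbourhood E of xt is a set containing an open set that contains xt.\<close>
definition KL :: "('a::real_inner \<Rightarrow> real) \<Rightarrow> bool" where
  "KL G \<longleftrightarrow> (\<forall>xt E. bounded E \<and> (\<exists>U. open U \<and> xt \<in> U \<and> U \<subseteq> E) \<longrightarrow>
     (\<exists>\<kappa>>0. \<exists>\<zeta>>0. \<exists>\<theta>. 0 \<le> \<theta> \<and> \<theta> < 1 \<and>
        (\<forall>x\<in>E. \<bar>G x - G xt\<bar> < \<zeta> \<longrightarrow> norm (grad G x) \<ge> \<kappa> * \<bar>G x - G xt\<bar> powr \<theta>)))"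

text \<open>The stacked matrix V has rows indexed by 'p; grp p is the block s to which
  row p belongs. Block norm: norm (V_s x - c_s).\<close>
definition blocknorm :: "('p \<Rightarrow> 's) \<Rightarrow> real^'n^'p \<Rightarrow> real^'p \<Rightarrow> 's \<Rightarrow> real^'n \<Rightarrow> real" where
  "blocknorm grp V c s x = sqrt (\<Sum>p\<in>{p. grp p = s}. ((V *v x - c) $ p)\<^sup>2)"

text \<open>The objective F_delta.\<close>
definition Fdelta :: "(real^'q \<Rightarrow> real) \<Rightarrow> real^'n^'q \<Rightarrow> real^'q \<Rightarrow> real^'n^'r
    \<Rightarrow> ('p \<Rightarrow> 's::finite) \<Rightarrow> real^'n^'p \<Rightarrow> real^'p \<Rightarrow> ('s \<Rightarrow> real \<Rightarrow> real \<Rightarrow> real) \<Rightarrow> real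
    \<Rightarrow> real^'n \<Rightarrow> real" where
  "Fdelta \<Phi> H y V0 grp V c \<psi> \<delta> x =
     \<Phi> (H *v x - y) + (\<Sum>s\<in>UNIV. \<psi> s \<delta> (blocknorm grp V c s x)) + (norm (V0 *v x))\<^sup>2"

text \<open>omega(t) = psi'(t)/t, extended by continuity at 0.\<close>
definition omega :: "(real \<Rightarrow> real) \<Rightarrow> real \<Rightarrow> real" where
  "omega f t = (if t = 0 then Lim (at 0) (\<lambda>r. deriv f r / r) else deriv f t / t)"

text \<open>The curvature matrix A(x).\<close>
definition Amat :: "real \<Rightarrow> real^'n^'q \<Rightarrow> real^'n^'r \<Rightarrow> ('p \<Rightarrow> 's) \<Rightarrow> real^'n^'p \<Rightarrow> real^'p
    \<Rightarrow> ('s \<Rightarrow> real \<Rightarrow> real \<Rightarrow> real) \<Rightarrow> real \<Rightarrow> real^'n \<Rightarrow> real^'n^'n" where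
  "Amat \<mu> H V0 grp V c \<psi> \<delta> x =
     \<mu> *\<^sub>R (transpose H ** H) + 2 *\<^sub>R (transpose V0 ** V0)
     + transpose V ** Diag (\<chi> p. omega (\<psi> (grp p) \<delta>) (blocknorm grp V c (grp p) x)) ** V"

end

theory Submission
  imports Defs
begin


lemma psi_props:
  fixes f :: "real \<Rightarrow> real" and wb :: real
  assumes diff: "\<And>t. f differentiable (at t)"
    and conc: "concave_on {0..} (\<lambda>t. f (sqrt t))"
    and dpos: "\<And>t. t > 0 \<Longrightarrow> 0 \<le> deriv f t \<and> deriv f t \<le> wb * t"
    and lim: "\<exists>l. ((\<lambda>t. deriv f t / t) \<longlongrightarrow> l) (at 0)"
  shows psi_omega_bnd: "\<And>t. t \<ge> 0 \<Longrightarrow> 0 \<le> omega f t \<and> omega f t \<le> wb"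
    and psi_major: "\<And>t0 t. t0 \<ge> 0 \<Longrightarrow> t \<ge> 0 \<Longrightarrow> f t \<le> f t0 + omega f t0 / 2 * (t\<^sup>2 - t0\<^sup>2)"
    and psi_mono: "\<And>a b. 0 \<le> a \<Longrightarrow> a \<le> b \<Longrightarrow> f a \<le> f b"
proof -
  obtain l where l: "((\<lambda>t. deriv f t / t) \<longlongrightarrow> l) (at 0)" using lim by blast
  have om0: "omega f 0 = l" unfolding omega_def using l by (simp add: tendsto_Lim)
  have lr: "((\<lambda>t. deriv f t / t) \<longlongrightarrow> l) (at_right 0)"
    using l by (simp add: filterlim_at_split)
  have D: "\<And>t. (f has_real_derivative deriv f t) (at t)"
    using diff DERIV_deriv_iff_real_differentiable by blast
  have ompos: "\<And>t. t > 0 \<Longrightarrow> 0 \<le> omega f t \<and> omega f t \<le> wb"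
    using dpos by (auto simp: omega_def divide_simps mult.commute)
  have q: "\<And>y. 0 < y \<Longrightarrow> 0 \<le> deriv f y / y \<and> deriv f y / y \<le> wb"
    using dpos by (auto simp: divide_simps mult.commute)
  have ev: "eventually (\<lambda>y. 0 \<le> deriv f y / y \<and> deriv f y / y \<le> wb) (at_right 0)"
    unfolding eventually_at_right_field using q by (intro exI[of _ 1]) auto
  have "0 \<le> l"
    by (rule tendsto_lowerbound[OF lr]) (use ev in \<open>auto elim: eventually_mono\<close>)
  moreover have "l \<le> wb"
    by (rule tendsto_upperbound[OF lr]) (use ev in \<open>auto elim: eventually_mono\<close>)
  ultimately show ob: "\<And>t. t \<ge> 0 \<Longrightarrow> 0 \<le> omega f t \<and> omega f t \<le> wb"
    using ompos om0 by (metis order_le_less)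
  have majp: "f t \<le> f t0 + omega f t0 / 2 * (t\<^sup>2 - t0\<^sup>2)" if "t0 > 0" "t \<ge> 0" for t0 t
  proof -
    have cv: "convex_on {0..} (\<lambda>x. - f (sqrt x))" using conc by (simp add: concave_on_def)
    have "t0\<^sup>2 \<in> interior {0::real..}" using that by simp
    have dd: "((\<lambda>x. - f (sqrt x)) has_field_derivative - (deriv f t0 * (inverse (sqrt (t0\<^sup>2)) / 2))) (at (t0\<^sup>2) within {0..})"
      apply (rule has_field_derivative_at_within)
      apply (rule DERIV_minus)
      apply (rule DERIV_chain2[OF _ DERIV_real_sqrt])
      using D that by auto
    have "- f (sqrt (t\<^sup>2)) - - f (sqrt (t0\<^sup>2)) \<ge> - (deriv f t0 * (inverse (sqrt (t0\<^sup>2)) / 2)) * (t\<^sup>2 - t0\<^sup>2)"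
      by (rule convex_on_imp_above_tangent[OF cv _ _ _ dd]) (use that in auto)
    then show ?thesis using that by (simp add: omega_def field_simps)
  qed
  show maj: "f t \<le> f t0 + omega f t0 / 2 * (t\<^sup>2 - t0\<^sup>2)" if "t0 \<ge> 0" "t \<ge> 0" for t0 t
  proof (cases "t0 = 0")
    case False then show ?thesis using majp that by auto
  next
    case True
    have cf: "continuous (at 0) f" using D DERIV_isCont by blast
    have L1: "((\<lambda>s. f s + (deriv f s / s) / 2 * (t\<^sup>2 - s\<^sup>2)) \<longlongrightarrow> f 0 + l / 2 * (t\<^sup>2 - 0\<^sup>2)) (at_right 0)"
      apply (intro tendsto_intros lr)
      using cf by (auto simp: continuous_at intro: tendsto_mono[OF at_le])
    have E1: "eventually (\<lambda>s. f t \<le> f s + (deriv f s / s) / 2 * (t\<^sup>2 - s\<^sup>2)) (at_right 0)"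
      unfolding eventually_at_right_field
      by (rule exI[of _ 1]) (use majp \<open>t \<ge> 0\<close> in \<open>auto simp: omega_def\<close>)
    have "f t \<le> f 0 + l / 2 * (t\<^sup>2 - 0\<^sup>2)"
      using tendsto_lowerbound[OF L1 E1] by simp
    then show ?thesis using True om0 by simp
  qed
  show "f a \<le> f b" if "0 \<le> a" "a \<le> b" for a b
  proof -
    have *: "f a' \<le> f b" if "0 < a'" "a' \<le> b" for a'
      by (rule DERIV_nonneg_imp_nondecreasing[OF that(2)]) (use D dpos that in force)
    show ?thesis
    proof (cases "a = 0")
      case False then show ?thesis using * that by auto
    next
      case True
      have cf: "continuous (at 0) f" using D DERIV_isCont by blast
      show ?thesis
      proof (cases "b = 0")
        case True then show ?thesis using \<open>a = 0\<close> by simp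
      next
        case False
        have L2: "(f \<longlongrightarrow> f 0) (at_right 0)" using cf by (auto simp: continuous_at intro: tendsto_mono[OF at_le])
        have E2: "eventually (\<lambda>s. f s \<le> f b) (at_right 0)"
          unfolding eventually_at_right_field using False that
          by (intro exI[of _ b]) (auto intro!: *)
        show ?thesis using True tendsto_upperbound[OF L2 E2] by simp
      qed
    qed
  qed
qed



lemma line_deriv:
  fixes \<Phi> :: "'a::real_inner \<Rightarrow> real"
  assumes "GDERIV \<Phi> (z + t *\<^sub>R e) :> g"
  shows "((\<lambda>t. \<Phi> (z + t *\<^sub>R e)) has_real_derivative (g \<bullet> e)) (at t)"
proof -
  have l: "((\<lambda>t. z + t *\<^sub>R e) has_derivative (\<lambda>s. s *\<^sub>R e)) (at t)"
    by (auto intro!: derivative_eq_intros)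
  have "((\<lambda>t. \<Phi> (z + t *\<^sub>R e)) has_derivative (\<lambda>s. (s *\<^sub>R e) \<bullet> g)) (at t)"
    using has_derivative_compose[OF l assms[unfolded gderiv_def]] by simp
  then show ?thesis unfolding has_field_derivative_def
    by (rule has_derivative_eq_rhs) (auto simp: fun_eq_iff inner_commute)
qed

lemma descent_lemma:
  fixes \<Phi> :: "'a::real_inner \<Rightarrow> real"
  assumes G: "\<And>z. GDERIV \<Phi> z :> gP z"
    and Lip: "\<And>z w. norm (gP z - gP w) \<le> L * norm (z - w)"
  shows "\<Phi> (z + e) \<le> \<Phi> z + gP z \<bullet> e + L / 2 * (norm e)\<^sup>2"
proof -
  define h where "h t = \<Phi> (z + t *\<^sub>R e) - t * (gP z \<bullet> e) - L / 2 * t\<^sup>2 * (norm e)\<^sup>2" for t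
  have dh: "(h has_real_derivative (gP (z + t *\<^sub>R e) \<bullet> e - gP z \<bullet> e - L * t * (norm e)\<^sup>2)) (at t)" for t
    unfolding h_def
    by (auto intro!: derivative_eq_intros line_deriv G simp: power2_eq_square)
  have neg: "gP (z + t *\<^sub>R e) \<bullet> e - gP z \<bullet> e - L * t * (norm e)\<^sup>2 \<le> 0" if "0 \<le> t" for t
  proof -
    have "gP (z + t *\<^sub>R e) \<bullet> e - gP z \<bullet> e = (gP (z + t *\<^sub>R e) - gP z) \<bullet> e" by (simp add: inner_diff_left)
    also have "\<dots> \<le> norm (gP (z + t *\<^sub>R e) - gP z) * norm e" by (rule norm_cauchy_schwarz)
    also have "\<dots> \<le> L * norm (t *\<^sub>R e) * norm e"
      using Lip[of "z + t *\<^sub>R e" z] by (simp add: mult_right_mono)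
    also have "\<dots> = L * t * (norm e)\<^sup>2" using that by (simp add: power2_eq_square)
    finally show ?thesis by simp
  qed
  have "h 1 \<le> h 0"
    apply (rule DERIV_nonpos_imp_nonincreasing[of 0 1 h])
     apply simp
    apply (rule exI, rule conjI, rule dh)
    using neg by auto
  then show ?thesis by (simp add: h_def)
qed



lemma dot_mv: "(A *v x) \<bullet> (y::real^'a) = x \<bullet> (transpose A *v y)"
  by (metis dot_lmul_matrix inner_commute transpose_matrix_vector)

lemma mv_bound: "\<exists>K>0. \<forall>v. norm ((M::real^'n^'p) *v v) \<le> K * norm v"
proof -
  have "bounded_linear ((*v) M)" by (simp add: linear_conv_bounded_linear)
  then obtain K where "K > 0" "\<And>v. norm (M *v v) \<le> norm v * K"
    using bounded_linear.pos_bounded by blast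
  then show ?thesis by (metis mult.commute)
qed

locale psi_ok =
  fixes f :: "real \<Rightarrow> real" and wb :: real
  assumes diff: "\<And>t. f differentiable (at t)"
    and conc: "concave_on {0..} (\<lambda>t. f (sqrt t))"
    and dpos: "\<And>t. t > 0 \<Longrightarrow> 0 \<le> deriv f t \<and> deriv f t \<le> wb * t"
    and lim: "\<exists>l. ((\<lambda>t. deriv f t / t) \<longlongrightarrow> l) (at 0)"
begin

lemma om_bnd: "t \<ge> 0 \<Longrightarrow> 0 \<le> omega f t \<and> omega f t \<le> wb"
  using psi_omega_bnd[OF diff conc dpos lim] by blast
lemma major: "t0 \<ge> 0 \<Longrightarrow> t \<ge> 0 \<Longrightarrow> f t \<le> f t0 + omega f t0 / 2 * (t\<^sup>2 - t0\<^sup>2)"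
  using psi_major[OF diff conc dpos lim] by blast
lemma mono: "0 \<le> a \<Longrightarrow> a \<le> b \<Longrightarrow> f a \<le> f b"
  using psi_mono[OF diff conc dpos lim] by blast

lemma wb_nonneg: "wb \<ge> 0" using om_bnd[of 0] by simp

lemma vec_major:
  fixes M :: "real^'n^'p" and c :: "real^'p"
  shows "f (norm (M *v (x + d) - c)) \<le> f (norm (M *v x - c))
     + (omega f (norm (M *v x - c)) *\<^sub>R (transpose M *v (M *v x - c))) \<bullet> d
     + omega f (norm (M *v x - c)) / 2 * (norm (M *v d))\<^sup>2"
proof -
  define r where "r = M *v x - c"
  have e: "M *v (x + d) - c = r + M *v d" by (simp add: r_def matrix_vector_right_distrib)
  have "(norm (r + M *v d))\<^sup>2 - (norm r)\<^sup>2 = 2 * (r \<bullet> (M *v d)) + (norm (M *v d))\<^sup>2"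
    by (simp add: power2_norm_eq_inner inner_add_left inner_add_right inner_commute)
  moreover have "r \<bullet> (M *v d) = (transpose M *v r) \<bullet> d"
    by (metis dot_mv inner_commute)
  ultimately show ?thesis
    using major[of "norm r" "norm (r + M *v d)"] unfolding e r_def[symmetric]
    by (simp add: algebra_simps)
qed

lemma vec_gderiv:
  fixes M :: "real^'n^'p" and c :: "real^'p"
  shows "GDERIV (\<lambda>x. f (norm (M *v x - c))) x :>
     omega f (norm (M *v x - c)) *\<^sub>R (transpose M *v (M *v x - c))"
proof (cases "M *v x - c = 0")
  case False
  define r where "r = M *v x - c"
  have l: "((\<lambda>x. M *v x - c) has_derivative (\<lambda>k. M *v k)) (at x)"
    by (auto intro!: derivative_eq_intros linear_imp_has_derivative)
  have n: "((\<lambda>y. norm y) has_derivative (\<lambda>k. k \<bullet> sgn r)) (at r)"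
    using GDERIV_norm[of r] False unfolding gderiv_def r_def by simp
  have "((\<lambda>x. norm (M *v x - c)) has_derivative (\<lambda>k. (M *v k) \<bullet> sgn r)) (at x)"
    using has_derivative_compose[OF l n[unfolded r_def]] unfolding r_def by simp
  then have g1: "GDERIV (\<lambda>x. norm (M *v x - c)) x :> transpose M *v sgn r"
    unfolding gderiv_def by (rule has_derivative_eq_rhs) (auto simp: fun_eq_iff dot_mv)
  have df: "DERIV f (norm (M *v x - c)) :> deriv f (norm (M *v x - c))"
    using diff DERIV_deriv_iff_real_differentiable by blast
  have "GDERIV (\<lambda>x. f (norm (M *v x - c))) x :> deriv f (norm r) *\<^sub>R (transpose M *v sgn r)"
    using GDERIV_DERIV_compose[OF g1 df] unfolding r_def by simp
  moreover have "deriv f (norm r) *\<^sub>R (transpose M *v sgn r) = omega f (norm r) *\<^sub>R (transpose M *v r)"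
    using False unfolding r_def[symmetric]
    by (simp add: omega_def sgn_div_norm matrix_vector_mult_scaleR divide_inverse)
  ultimately show ?thesis unfolding r_def by simp
next
  case True
  obtain K where K: "K > 0" "\<And>v. norm (M *v v) \<le> K * norm v" using mv_bound by blast
  have bl: "bounded_linear (\<lambda>k::real^'n. k \<bullet> 0)" by simp
  have "((\<lambda>y. f (norm (M *v y - c))) has_derivative (\<lambda>k. k \<bullet> 0)) (at x)"
    unfolding has_derivative_iff_norm
  proof (rule conjI[OF bl], rule Lim_null_comparison[where g="\<lambda>y. wb / 2 * K\<^sup>2 * norm (y - x)"])
    show "\<forall>\<^sub>F y in at x. norm (norm (f (norm (M *v y - c)) - f (norm (M *v x - c)) - (y - x) \<bullet> 0) / norm (y - x))
         \<le> wb / 2 * K\<^sup>2 * norm (y - x)"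
    proof (rule always_eventually, rule allI)
      fix y
      have e: "M *v y - c = M *v (y - x)" proof -
        have "M *v (y - x) = M *v y - M *v x" by (rule matrix_vector_mult_diff_distrib)
        also have "M *v x = c" using True by simp
        finally show ?thesis by simp
      qed
      have ee: "M *v x - c = 0" using True .
      have a: "0 \<le> f (norm (M *v (y - x))) - f 0" using mono[of 0 "norm (M *v (y-x))"] by simp
      have b: "f (norm (M *v (y - x))) - f 0 \<le> wb / 2 * (norm (M *v (y - x)))\<^sup>2"
        using major[of 0 "norm (M *v (y - x))"] om_bnd[of 0]
      proof -
        have "f (norm (M *v (y - x))) \<le> f 0 + omega f 0 / 2 * ((norm (M *v (y - x)))\<^sup>2 - 0\<^sup>2)"
          using major[of 0 "norm (M *v (y - x))"] by simp
        moreover have "omega f 0 / 2 * (norm (M *v (y - x)))\<^sup>2 \<le> wb / 2 * (norm (M *v (y - x)))\<^sup>2"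
          using om_bnd[of 0] by (intro mult_right_mono) auto
        ultimately show ?thesis by simp
      qed
      have c: "(norm (M *v (y - x)))\<^sup>2 \<le> (K * norm (y - x))\<^sup>2"
        using K(2)[of "y - x"] by (simp add: power_mono)
      have d: "wb / 2 * (norm (M *v (y - x)))\<^sup>2 \<le> wb / 2 * K\<^sup>2 * (norm (y - x))\<^sup>2"
        using mult_left_mono[OF c, of "wb/2"] wb_nonneg by (simp add: power_mult_distrib)
      show "norm (norm (f (norm (M *v y - c)) - f (norm (M *v x - c)) - (y - x) \<bullet> 0) / norm (y - x))
         \<le> wb / 2 * K\<^sup>2 * norm (y - x)"
      proof (cases "y = x")
        case True then show ?thesis by simp
      next
        case False
        then have pos: "norm (y - x) > 0" by simp
        have "norm (norm (f (norm (M *v y - c)) - f (norm (M *v x - c)) - (y - x) \<bullet> 0) / norm (y - x))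
            = (f (norm (M *v (y - x))) - f 0) / norm (y - x)"
          unfolding e ee using a by simp
        also have "\<dots> \<le> (wb / 2 * K\<^sup>2 * (norm (y - x))\<^sup>2) / norm (y - x)"
          using b d pos by (intro divide_right_mono) auto
        also have "\<dots> = wb / 2 * K\<^sup>2 * norm (y - x)" using pos by (simp add: power2_eq_square)
        finally show ?thesis .
      qed
    qed
    have "((\<lambda>y. y - x) \<longlongrightarrow> 0) (at x)" using tendsto_diff[OF tendsto_ident_at tendsto_const, of x x] by simp
    then show "((\<lambda>y. wb / 2 * K\<^sup>2 * norm (y - x)) \<longlongrightarrow> 0) (at x)"
      by (intro tendsto_mult_right_zero tendsto_norm_zero)
  qed
  then show ?thesis using True unfolding gderiv_def by simp
qed

end



lemma proj_exists:
  fixes S :: "'a::euclidean_space set"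
  assumes S: "subspace S"
  shows "\<exists>P. linear P \<and> (\<forall>y. P y \<in> S) \<and> (\<forall>y w. w \<in> S \<longrightarrow> (y - P y) \<bullet> w = 0)"
proof -
  have ex: "\<exists>p. p \<in> S \<and> (\<forall>w\<in>S. (y - p) \<bullet> w = 0)" for y
  proof -
    obtain p z where "p \<in> span S" "\<And>w. w \<in> span S \<Longrightarrow> orthogonal z w" "y = p + z"
      using orthogonal_subspace_decomp_exists by blast
    moreover have "span S = S" using S by simp
    ultimately show ?thesis by (intro exI[of _ p]) (auto simp: orthogonal_def)
  qed
  have uniq: "p = p'" if "p \<in> S" "\<forall>w\<in>S. (y - p) \<bullet> w = 0" "p' \<in> S" "\<forall>w\<in>S. (y - p') \<bullet> w = 0" for y p p'
  proof -
    have "p - p' \<in> S" using that S by (simp add: subspace_diff)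
    then have "(y - p') \<bullet> (p - p') - (y - p) \<bullet> (p - p') = 0" using that by simp
    then have "(p - p') \<bullet> (p - p') = 0" by (simp add: algebra_simps inner_diff_left)
    then show ?thesis by simp
  qed
  define P where "P y = (SOME p. p \<in> S \<and> (\<forall>w\<in>S. (y - p) \<bullet> w = 0))" for y
  have P: "P y \<in> S \<and> (\<forall>w\<in>S. (y - P y) \<bullet> w = 0)" for y
    unfolding P_def using someI_ex[OF ex[of y]] .
  have Peq: "P y = p" if "p \<in> S" "\<forall>w\<in>S. (y - p) \<bullet> w = 0" for y p
    using uniq[OF _ _ that] P by blast
  have "linear P"
  proof (rule linearI)
    fix a b
    show "P (a + b) = P a + P b"
      using P[of a] P[of b] S
      by (intro Peq) (auto simp: subspace_add inner_diff_left inner_add_left algebra_simps)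
  next
    fix r a
    show "P (r *\<^sub>R a) = r *\<^sub>R P a"
      using P[of a] S
      by (intro Peq) (auto simp: subspace_scale inner_diff_left algebra_simps)
  qed
  then show ?thesis using P by blast
qed

lemma sym_matrix_adj:
  fixes M :: "real^'m^'m"
  assumes "\<And>y z. (M *v y) \<bullet> z = y \<bullet> (M *v z)"
  shows "transpose M = M"
proof -
  have "transpose M *v z = M *v z" for z
  proof -
    have "\<forall>y. y \<bullet> (transpose M *v z - M *v z) = 0"
    proof
      fix y
      have "y \<bullet> (transpose M *v z) = z \<bullet> (M *v y)"
        by (metis dot_lmul_matrix inner_commute transpose_matrix_vector)
      then show "y \<bullet> (transpose M *v z - M *v z) = 0"
        using assms[of y z] by (simp add: inner_diff_right inner_commute)
    qed
    then show ?thesis by (metis inner_eq_zero_iff right_minus_eq)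
  qed
  then show ?thesis by (simp add: matrix_eq)
qed



lemma pinv_exists_sym:
  fixes B :: "real^'m^'m"
  assumes sym: "transpose B = B"
  shows "\<exists>X. B ** X ** B = B \<and> X ** B ** X = X \<and>
            transpose (B ** X) = B ** X \<and> transpose (X ** B) = X ** B"
proof -
  define S where "S = range ((*v) B)"
  have S: "subspace S" unfolding S_def by (rule linear_subspace_image) auto
  obtain P where P: "linear P" "\<And>y. P y \<in> S" "\<And>y w. w \<in> S \<Longrightarrow> (y - P y) \<bullet> w = 0"
    using proj_exists[OF S] by blast
  have adj: "(B *v u) \<bullet> v = u \<bullet> (B *v v)" for u v
  proof -
    have "(B *v u) \<bullet> v = u \<bullet> (transpose B *v v)"
      by (metis dot_lmul_matrix inner_commute transpose_matrix_vector)
    then show ?thesis using sym by simp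
  qed
  have ker: "B *v v = 0" if "\<And>w. w \<in> S \<Longrightarrow> v \<bullet> w = 0" for v
  proof -
    have "(B *v v) \<bullet> (B *v v) = v \<bullet> (B *v (B *v v))" by (rule adj)
    also have "\<dots> = 0" using that unfolding S_def by auto
    finally show ?thesis by simp
  qed
  have inj: "u = v" if "u \<in> S" "v \<in> S" "B *v u = B *v v" for u v
  proof -
    have "u - v \<in> S" using that S by (simp add: subspace_diff)
    then obtain a where a: "u - v = B *v a" unfolding S_def by auto
    have "(u - v) \<bullet> (u - v) = a \<bullet> (B *v (u - v))" using adj[of a "u - v"] a by simp
    also have "\<dots> = 0" using that by (simp add: matrix_vector_mult_diff_distrib)
    finally show ?thesis by simp
  qed
  have PS: "P s = s" if "s \<in> S" for s
  proof -
    have "s - P s \<in> S" using P(2)[of s] that S by (simp add: subspace_diff)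
    then have "(s - P s) \<bullet> (s - P s) = 0" using P(3) by blast
    then show ?thesis by simp
  qed
  have BP: "B *v (P v) = B *v v" for v
  proof -
    have "B *v (v - P v) = 0" using P(3) by (intro ker) auto
    then show ?thesis by (simp add: matrix_vector_mult_diff_distrib)
  qed
  define X where "X y = P (SOME w. B *v w = P y)" for y
  have X: "X y \<in> S \<and> B *v X y = P y" for y
  proof -
    have "\<exists>w. B *v w = P y" using P(2)[of y] unfolding S_def by auto
    then have "B *v (SOME w. B *v w = P y) = P y" by (rule someI_ex)
    then show ?thesis unfolding X_def using BP P(2) by simp
  qed
  have Xeq: "X y = s" if "s \<in> S" "B *v s = P y" for y s
    using inj[of "X y" s] X that by auto
  have linX: "linear X"
  proof (rule linearI)
    fix a b
    show "X (a + b) = X a + X b"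
      using X[of a] X[of b] S P(1)
      by (intro Xeq) (auto simp: subspace_add linear_add matrix_vector_right_distrib)
  next
    fix r a
    show "X (r *\<^sub>R a) = r *\<^sub>R X a"
      using X[of a] S P(1)
      by (intro Xeq) (auto simp: subspace_scale linear_scale matrix_vector_mult_scaleR)
  qed
  define Xm where "Xm = matrix X"
  have Xm: "Xm *v y = X y" for y unfolding Xm_def using linX by (simp add: matrix_works)
  have BXB: "B ** Xm ** B = B"
    unfolding matrix_eq
  proof
    fix v
    have "B *v X (B *v v) = B *v v" using X[of "B *v v"] PS[of "B *v v"] unfolding S_def by auto
    then show "(B ** Xm ** B) *v v = B *v v" by (simp add: matrix_vector_mul_assoc[symmetric] Xm)
  qed
  have XBX: "Xm ** B ** Xm = Xm"
    unfolding matrix_eq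
  proof
    fix y
    have "X (B *v X y) = X y"
    proof (rule Xeq)
      show "X y \<in> S" using X by blast
      have "B *v X y \<in> S" unfolding S_def by simp
      then show "B *v X y = P (B *v X y)" using PS by simp
    qed
    then show "(Xm ** B ** Xm) *v y = Xm *v y" by (simp add: matrix_vector_mul_assoc[symmetric] Xm)
  qed
  have Psa: "P y \<bullet> z = y \<bullet> P z" for y z
  proof -
    have "P y \<bullet> z = P y \<bullet> P z" using P(3)[of "P y" z] P(2) by (simp add: inner_diff_right inner_commute)
    moreover have "y \<bullet> P z = P y \<bullet> P z" using P(3)[of "P z" y] P(2) by (simp add: inner_diff_left)
    ultimately show ?thesis by simp
  qed
  have T1: "transpose (B ** Xm) = B ** Xm"
    by (rule sym_matrix_adj) (simp add: matrix_vector_mul_assoc[symmetric] Xm X Psa)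
  have XBP: "X (B *v v) = P v" for v
  proof (rule Xeq)
    show "P v \<in> S" by (rule P(2))
    have "B *v v \<in> S" unfolding S_def by simp
    then show "B *v P v = P (B *v v)" using BP PS by simp
  qed
  have T2: "transpose (Xm ** B) = Xm ** B"
    by (rule sym_matrix_adj) (simp add: matrix_vector_mul_assoc[symmetric] Xm XBP Psa)
  show ?thesis using BXB XBX T1 T2 by blast
qed



lemma pinv_unique:
  fixes B X Y :: "real^'m^'m"
  assumes X: "B ** X ** B = B" "X ** B ** X = X" "transpose (B ** X) = B ** X" "transpose (X ** B) = X ** B"
    and Y: "B ** Y ** B = B" "Y ** B ** Y = Y" "transpose (B ** Y) = B ** Y" "transpose (Y ** B) = Y ** B"
  shows "X = Y"
proof -
  have 1: "X = X ** (B ** X)" using X(2) by (simp add: matrix_mul_assoc)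
  also have "\<dots> = X ** (transpose X ** transpose B)" using X(3) by (metis matrix_transpose_mul)
  also have "\<dots> = X ** (transpose X ** transpose (B ** Y ** B))" using Y(1) by simp
  also have "\<dots> = X ** (transpose (B ** X)) ** (transpose (B ** Y))"
    by (simp add: matrix_transpose_mul matrix_mul_assoc)
  also have "\<dots> = X ** B ** Y" using X(3) Y(3) X(1)
    by (metis matrix_mul_assoc)
  finally have XY: "X = X ** B ** Y" .
  have "Y = (Y ** B) ** Y" using Y(2) by simp
  also have "\<dots> = transpose B ** transpose Y ** Y" using Y(4) by (metis matrix_transpose_mul)
  also have "\<dots> = transpose (B ** X ** B) ** transpose Y ** Y" using X(1) by simp
  also have "\<dots> = transpose (X ** B) ** transpose (Y ** B) ** Y"
    by (simp add: matrix_transpose_mul matrix_mul_assoc)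
  also have "\<dots> = X ** B ** Y" using X(4) Y(4) Y(2) by (metis matrix_mul_assoc)
  finally show ?thesis using XY by simp
qed



lemma pinv_sym:
  fixes B :: "real^'m^'m"
  assumes "transpose B = B"
  shows "B ** pinv B ** B = B \<and> pinv B ** B ** pinv B = pinv B \<and>
            transpose (B ** pinv B) = B ** pinv B \<and> transpose (pinv B ** B) = pinv B ** B"
proof -
  obtain X where X: "B ** X ** B = B \<and> X ** B ** X = X \<and>
            transpose (B ** X) = B ** X \<and> transpose (X ** B) = X ** B"
    using pinv_exists_sym[OF assms] by blast
  have "\<exists>!X. B ** X ** B = B \<and> X ** B ** X = X \<and>
            transpose (B ** X) = B ** X \<and> transpose (X ** B) = X ** B"
    using X pinv_unique by (intro ex1I[of _ X]) blast+
  then show ?thesis unfolding pinv_def by (rule theI')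
qed



lemma dot_tv: "(transpose D *v y) \<bullet> (v::real^'a) = y \<bullet> (D *v v)"
  by (metis dot_mv inner_commute transpose_transpose)

locale mm =
  fixes F :: "real^'n \<Rightarrow> real" and G :: "real^'n \<Rightarrow> real^'n" and A :: "real^'n \<Rightarrow> real^'n^'n"
    and \<nu> \<nu>b :: real
  assumes major: "\<And>z d. F (z + d) \<le> F z + G z \<bullet> d + 1/2 * (d \<bullet> (A z *v d))"
    and symA: "\<And>z. transpose (A z) = A z"
    and nu_pos: "\<nu> > 0"
    and low: "\<And>z d. \<nu> * (norm d)\<^sup>2 \<le> d \<bullet> (A z *v d)"
    and up: "\<And>z d. d \<bullet> (A z *v d) \<le> \<nu>b * (norm d)\<^sup>2"
begin

lemma step:
  fixes D :: "real^'m^'n" and z :: "real^'n"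
  defines "B \<equiv> transpose D ** A z ** D"
  defines "\<Delta> \<equiv> - (pinv B *v (transpose D *v G z))"
  shows "F (z + D *v \<Delta>) \<le> F z - \<nu> / 2 * (norm (D *v \<Delta>))\<^sup>2"
    and "\<And>v. F (z + D *v \<Delta>) \<le> F z + G z \<bullet> (D *v v) + 1/2 * ((D *v v) \<bullet> (A z *v (D *v v)))"
proof -
  define w where "w = transpose D *v G z"
  define X where "X = pinv B"
  have Bq: "u \<bullet> (B *v v) = (D *v u) \<bullet> (A z *v (D *v v))" for u v
    unfolding B_def by (simp add: matrix_vector_mul_assoc[symmetric] dot_mv inner_commute)
  have symB: "transpose B = B"
    unfolding B_def by (simp add: matrix_transpose_mul symA matrix_mul_assoc)
  have P: "B ** X ** B = B" "transpose (B ** X) = B ** X"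
    using pinv_sym[OF symB] unfolding X_def by auto
  have Bsa: "(B *v u) \<bullet> v = u \<bullet> (B *v v)" for u v
    using dot_mv[of B u v] symB by simp
  have BXsa: "((B ** X) *v u) \<bullet> v = u \<bullet> ((B ** X) *v v)" for u v
    using dot_mv[of "B ** X" u v] P(2) by simp
  have BXBX: "(B ** X) *v ((B ** X) *v u) = (B ** X) *v u" for u
    using P(1) by (metis matrix_mul_assoc matrix_vector_mul_assoc)
  have BXB: "(B ** X) *v (B *v u) = B *v u" for u
    using P(1) by (metis matrix_vector_mul_assoc)
  have psd: "0 \<le> u \<bullet> (B *v u)" for u
    using Bq[of u u] low[of "D *v u" z] nu_pos
    by (smt (verit) mult_nonneg_nonneg zero_le_power2)
  define r where "r = w - (B ** X) *v w"
  have r1: "r \<bullet> (B *v v) = 0" for v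
  proof -
    have "((B ** X) *v w) \<bullet> (B *v v) = w \<bullet> ((B ** X) *v (B *v v))" by (rule BXsa)
    then show ?thesis unfolding r_def by (simp add: inner_diff_left BXB)
  qed
  have "\<nu> * (norm (D *v r))\<^sup>2 \<le> 0" using low[of "D *v r" z] r1[of r] Bq[of r r] by simp
  then have "(norm (D *v r))\<^sup>2 \<le> 0" using nu_pos by (simp add: mult_le_0_iff)
  then have Dr: "D *v r = 0" by simp
  have "r \<bullet> r = 0"
  proof -
    have "r \<bullet> w = w \<bullet> r" by (rule inner_commute)
    also have "\<dots> = G z \<bullet> (D *v r)" unfolding w_def by (rule dot_tv)
    also have "\<dots> = (D *v r) \<bullet> G z" by (rule inner_commute)
    finally have "r \<bullet> w = (D *v r) \<bullet> G z" .
    moreover have "r \<bullet> ((B ** X) *v w) = ((B ** X) *v r) \<bullet> w" using BXsa by (simp add: inner_commute)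
    moreover have "(B ** X) *v r = 0" unfolding r_def by (simp add: matrix_vector_mult_diff_distrib BXBX)
    moreover have "r \<bullet> r = r \<bullet> w - r \<bullet> ((B ** X) *v w)"
    proof -
      have "r \<bullet> r = r \<bullet> (w - (B ** X) *v w)" by (simp only: r_def)
      then show ?thesis by (simp only: inner_diff_right)
    qed
    ultimately show ?thesis using Dr by simp
  qed
  have mneg: "M *v (- u) = - (M *v u)" for M :: "real^'m^'m" and u
    using matrix_vector_mult_diff_distrib[of M 0 u] by simp
  have BD: "B *v \<Delta> = - w"
  proof -
    have "B *v \<Delta> = - ((B ** X) *v w)"
      unfolding \<Delta>_def w_def[symmetric] X_def[symmetric] by (simp add: mneg matrix_vector_mul_assoc)
    also have "(B ** X) *v w = w" using \<open>r \<bullet> r = 0\<close> unfolding r_def by simp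
    finally show ?thesis .
  qed
  have q1: "G z \<bullet> (D *v v) = w \<bullet> v" for v unfolding w_def by (rule dot_tv[symmetric])
  have q2: "(D *v v) \<bullet> (A z *v (D *v v)) = v \<bullet> (B *v v)" for v using Bq by simp
  have val: "F (z + D *v \<Delta>) \<le> F z + w \<bullet> \<Delta> + 1/2 * (\<Delta> \<bullet> (B *v \<Delta>))"
    using major[of z "D *v \<Delta>"] q1 q2 by simp
  have wD: "w \<bullet> \<Delta> = - (\<Delta> \<bullet> (B *v \<Delta>))" using BD by (simp add: inner_commute)
  show "F (z + D *v \<Delta>) \<le> F z - \<nu> / 2 * (norm (D *v \<Delta>))\<^sup>2"
    using val wD low[of "D *v \<Delta>" z] q2[of \<Delta>] by simp
  show "F (z + D *v \<Delta>) \<le> F z + G z \<bullet> (D *v v) + 1/2 * ((D *v v) \<bullet> (A z *v (D *v v)))" for v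
  proof -
    have "(v - \<Delta>) \<bullet> (B *v (v - \<Delta>)) \<ge> 0" by (rule psd)
    moreover have "(v - \<Delta>) \<bullet> (B *v (v - \<Delta>)) = v \<bullet> (B *v v) - 2 * (\<Delta> \<bullet> (B *v v)) + \<Delta> \<bullet> (B *v \<Delta>)"
    proof -
      have e1: "B *v (v - \<Delta>) = B *v v - B *v \<Delta>" by (rule matrix_vector_mult_diff_distrib)
      have e2: "v \<bullet> (B *v \<Delta>) = \<Delta> \<bullet> (B *v v)" by (subst inner_commute) (rule Bsa)
      have "(v - \<Delta>) \<bullet> (B *v v - B *v \<Delta>) = v \<bullet> (B *v v) - v \<bullet> (B *v \<Delta>) - (\<Delta> \<bullet> (B *v v) - \<Delta> \<bullet> (B *v \<Delta>))"
        by (simp only: inner_diff_left inner_diff_right)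
      then show ?thesis unfolding e1 e2 by simp
    qed
    moreover have "w \<bullet> v = - (\<Delta> \<bullet> (B *v v))"
    proof -
      have "w = - (B *v \<Delta>)" using BD by simp
      then have "w \<bullet> v = - ((B *v \<Delta>) \<bullet> v)" by simp
      then show ?thesis using Bsa[of \<Delta> v] by simp
    qed
    ultimately have "w \<bullet> \<Delta> + 1/2 * (\<Delta> \<bullet> (B *v \<Delta>)) \<le> w \<bullet> v + 1/2 * (v \<bullet> (B *v v))"
      using wD by simp
    then show ?thesis using val q1 q2 by simp
  qed
qed
end



lemma powr_tangent:
  fixes s t \<theta> :: real
  assumes "0 \<le> t" "t \<le> s" "0 < s" "0 \<le> \<theta>" "\<theta> < 1"
  shows "(1 - \<theta>) * (s - t) / s powr \<theta> \<le> s powr (1 - \<theta>) - t powr (1 - \<theta>)"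
proof -
  define \<alpha> where "\<alpha> = 1 - \<theta>"
  have a: "0 < \<alpha>" "\<alpha> \<le> 1" using assms unfolding \<alpha>_def by auto
  have sp: "s powr \<alpha> = s * (1 / s powr \<theta>)" unfolding \<alpha>_def using assms
    by (simp add: powr_diff)
  have key: "t powr \<alpha> \<le> (\<alpha> * (t / s) + (1 - \<alpha>)) * s powr \<alpha>"
  proof (cases "t = 0")
    case True then show ?thesis using a assms by simp
  next
    case False
    then have tp: "t > 0" using assms by simp
    have "(t / s) powr \<alpha> * 1 powr (1 - \<alpha>) \<le> \<alpha> * (t / s) + (1 - \<alpha>) * 1"
      using a tp assms by (intro Youngs_inequality_0) auto
    then have "(t / s) powr \<alpha> \<le> \<alpha> * (t / s) + (1 - \<alpha>)" by simp
    moreover have "t powr \<alpha> = (t / s) powr \<alpha> * s powr \<alpha>"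
      using tp assms by (simp add: powr_divide)
    ultimately show ?thesis by (simp add: mult_right_mono)
  qed
  have "s powr \<alpha> - t powr \<alpha> \<ge> s powr \<alpha> - (\<alpha> * (t / s) + (1 - \<alpha>)) * s powr \<alpha>" using key by simp
  also have "s powr \<alpha> - (\<alpha> * (t / s) + (1 - \<alpha>)) * s powr \<alpha> = \<alpha> * (s - t) / s powr \<theta>"
    unfolding sp using assms by (simp add: field_simps)
  finally show ?thesis unfolding \<alpha>_def .
qed

lemma kl_scalar:
  fixes s t g a c2 \<kappa> \<theta> st :: real
  assumes "0 \<le> t" "t \<le> s" "a > 0" "\<kappa> > 0" "0 \<le> \<theta>" "\<theta> < 1" "a * g\<^sup>2 \<le> s - t" "g \<ge> 0"
    "\<kappa> * s powr \<theta> \<le> g" "st \<le> c2 * sqrt (s - t)" "c2 \<ge> 0"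
  shows "st \<le> c2 / ((1 - \<theta>) * \<kappa> * sqrt a) * (s powr (1 - \<theta>) - t powr (1 - \<theta>))"
proof (cases "s = t")
  case True then show ?thesis using assms by simp
next
  case False
  then have st: "t < s" "0 < s" using assms by auto
  have sth: "s powr \<theta> > 0" using st by simp
  have gpos: "g > 0" using assms(4,9) sth by (smt (verit) mult_pos_pos)
  have P1: "(1 - \<theta>) * (s - t) / s powr \<theta> \<le> s powr (1 - \<theta>) - t powr (1 - \<theta>)"
    using powr_tangent assms st by blast
  have P2: "\<kappa> * (s - t) / g \<le> (s - t) / s powr \<theta>"
  proof -
    have "\<kappa> / g \<le> 1 / s powr \<theta>" using assms(9) sth gpos by (simp add: field_simps)
    then have "(s - t) * (\<kappa> / g) \<le> (s - t) * (1 / s powr \<theta>)" using st by (intro mult_left_mono) auto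
    then show ?thesis by (simp add: mult.commute)
  qed
  have "g\<^sup>2 \<le> (s - t) / a" using assms(3,7) by (simp add: field_simps)
  then have "g \<le> sqrt ((s - t) / a)" using gpos by (simp add: real_le_rsqrt)
  then have "(s - t) / sqrt ((s - t) / a) \<le> (s - t) / g"
    using gpos st assms(3) by (intro divide_left_mono) auto
  moreover have "(s - t) / sqrt ((s - t) / a) = sqrt a * sqrt (s - t)"
    using st assms(3)
    by (simp add: real_sqrt_divide field_simps)
  ultimately have P3: "sqrt a * sqrt (s - t) \<le> (s - t) / g" by simp
  have "(1 - \<theta>) * \<kappa> * (sqrt a * sqrt (s - t)) \<le> (1 - \<theta>) * \<kappa> * ((s - t) / g)"
    using P3 assms by (intro mult_left_mono) auto
  also have "\<dots> = (1 - \<theta>) * (\<kappa> * (s - t) / g)" by simp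
  also have "\<dots> \<le> (1 - \<theta>) * ((s - t) / s powr \<theta>)" using P2 assms by (intro mult_left_mono) auto
  also have "\<dots> \<le> s powr (1 - \<theta>) - t powr (1 - \<theta>)" using P1 by simp
  finally have Q: "(1 - \<theta>) * \<kappa> * sqrt a * sqrt (s - t) \<le> s powr (1 - \<theta>) - t powr (1 - \<theta>)"
    by (simp add: mult.assoc)
  have pos: "(1 - \<theta>) * \<kappa> * sqrt a > 0" using assms by simp
  have eqp: "c2 * x = c2 / p * (p * x)" if "p > 0" for p x :: real using that by simp
  have "st \<le> c2 * sqrt (s - t)" by fact
  also have "\<dots> = c2 / ((1 - \<theta>) * \<kappa> * sqrt a) * ((1 - \<theta>) * \<kappa> * sqrt a * sqrt (s - t))"
    by (rule eqp[OF pos])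
  also have "\<dots> \<le> c2 / ((1 - \<theta>) * \<kappa> * sqrt a) * (s powr (1 - \<theta>) - t powr (1 - \<theta>))"
    using Q pos assms(11) by (intro mult_left_mono) auto
  finally show ?thesis .
qed



lemma mv_neg: "(M::real^'a^'b) *v (- v) = - (M *v v)"
  using matrix_vector_mult_diff_distrib[of M 0 v] by simp

context mm begin

lemma nub_pos: "\<nu>b > 0"
proof -
  obtain i :: 'n where True by blast
  define d :: "real^'n" where "d = axis i 1"
  have "d \<noteq> 0" unfolding d_def by (simp add: axis_eq_0_iff)
  then have np: "(norm d)\<^sup>2 > 0" by simp
  have "\<nu> * (norm d)\<^sup>2 \<le> \<nu>b * (norm d)\<^sup>2" using low[of d undefined] up[of d undefined] by linarith
  then have "\<nu> \<le> \<nu>b" using np by simp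
  then show ?thesis using nu_pos by simp
qed

lemma inner_iter:
  fixes D :: "real^'m^'n" and u :: "nat \<Rightarrow> real^'m" and x0 :: "real^'n" and j1 :: 'm
  assumes u0: "u 0 = 0"
    and uj: "\<And>j. 1 \<le> j \<Longrightarrow> j \<le> J \<Longrightarrow> u j = u (j - 1)
         - pinv (transpose D ** A (x0 + D *v u (j - 1)) ** D) *v (transpose D *v G (x0 + D *v u (j - 1)))"
    and J: "J \<ge> 1"
    and A4a: "G x0 \<bullet> column j1 D \<le> - \<gamma>0 * (norm (G x0))\<^sup>2"
    and A4b: "norm (column j1 D) \<le> \<gamma>1 * norm (G x0)"
    and g: "\<gamma>0 > 0" "\<gamma>1 > 0"
  shows "F (x0 + D *v u J) \<le> F x0 - \<gamma>0\<^sup>2 / (2 * \<nu>b * \<gamma>1\<^sup>2) * (norm (G x0))\<^sup>2"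
    and "norm (D *v u J) \<le> J * sqrt (2 / \<nu> * (F x0 - F (x0 + D *v u J)))"
proof -
  define z where "z j = x0 + D *v u j" for j
  have z0: "z 0 = x0" unfolding z_def u0 by simp
  have zs: "z j = z (j - 1) + D *v (- (pinv (transpose D ** A (z (j - 1)) ** D) *v (transpose D *v G (z (j - 1)))))"
    if "1 \<le> j" "j \<le> J" for j
    unfolding z_def uj[OF that] by (simp add: matrix_vector_mult_diff_distrib mv_neg)
  have dec: "F (z j) \<le> F (z (j - 1)) - \<nu> / 2 * (norm (z j - z (j - 1)))\<^sup>2" if "1 \<le> j" "j \<le> J" for j
    using step(1)[where D=D and z="z (j - 1)"] zs[OF that] by simp
  have decs: "F (z j) \<le> F (z (j - 1))" if "1 \<le> j" "j \<le> J" for j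
    using dec[OF that] nu_pos by (smt (verit) mult_nonneg_nonneg zero_le_power2 divide_nonneg_pos)
  have mono: "F (z j) \<le> F (z i)" if "i \<le> j" "j \<le> J" for i j
    using that
  proof (induction j)
    case 0 then show ?case by simp
  next
    case (Suc j)
    show ?case
    proof (cases "i = Suc j")
      case True then show ?thesis by simp
    next
      case False
      then have "i \<le> j" using Suc by simp
      then have "F (z j) \<le> F (z i)" using Suc by simp
      moreover have "F (z (Suc j)) \<le> F (z j)" using decs[of "Suc j"] Suc by simp
      ultimately show ?thesis by simp
    qed
  qed
  \<comment> \<open>first step\<close>
  define gn where "gn = norm (G x0)"
  define c where "c = column j1 D"
  define \<tau> where "\<tau> = \<gamma>0 / (\<nu>b * \<gamma>1\<^sup>2)"
  have nb: "\<nu>b > 0" by (rule nub_pos)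
  have tau: "\<tau> > 0" unfolding \<tau>_def using g nb by simp
  have z1: "z 1 = z 0 + D *v (- (pinv (transpose D ** A (z 0) ** D) *v (transpose D *v G (z 0))))"
    using zs[of 1] J by simp
  have Dv: "D *v (\<tau> *\<^sub>R axis j1 1) = \<tau> *\<^sub>R c"
    unfolding c_def by (simp add: matrix_vector_mult_scaleR matrix_vector_mult_basis)
  have "F (z 1) \<le> F x0 + G x0 \<bullet> (\<tau> *\<^sub>R c) + 1/2 * ((\<tau> *\<^sub>R c) \<bullet> (A x0 *v (\<tau> *\<^sub>R c)))"
    using step(2)[where D=D and z=x0 and v="\<tau> *\<^sub>R axis j1 1"] z1 z0 Dv by simp
  also have "G x0 \<bullet> (\<tau> *\<^sub>R c) \<le> - \<tau> * \<gamma>0 * gn\<^sup>2"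
    using mult_left_mono[OF A4a, of \<tau>] tau unfolding c_def gn_def by simp
  also have "(\<tau> *\<^sub>R c) \<bullet> (A x0 *v (\<tau> *\<^sub>R c)) \<le> \<nu>b * \<tau>\<^sup>2 * (\<gamma>1 * gn)\<^sup>2"
  proof -
    have "(\<tau> *\<^sub>R c) \<bullet> (A x0 *v (\<tau> *\<^sub>R c)) \<le> \<nu>b * (norm (\<tau> *\<^sub>R c))\<^sup>2" by (rule up)
    also have "(norm (\<tau> *\<^sub>R c))\<^sup>2 = \<tau>\<^sup>2 * (norm c)\<^sup>2" using tau by (simp add: power_mult_distrib)
    also have "(norm c)\<^sup>2 \<le> (\<gamma>1 * gn)\<^sup>2" using A4b unfolding c_def gn_def by (simp add: power_mono)
    finally show ?thesis using nb tau by (simp add: mult_left_mono mult.assoc)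
  qed
  finally have "F (z 1) \<le> F x0 + - \<tau> * \<gamma>0 * gn\<^sup>2 + 1 / 2 * (\<nu>b * \<tau>\<^sup>2 * (\<gamma>1 * gn)\<^sup>2)" by simp
  also have "\<dots> = F x0 - \<gamma>0\<^sup>2 / (2 * \<nu>b * \<gamma>1\<^sup>2) * gn\<^sup>2"
    unfolding \<tau>_def using nb g by (simp add: field_simps power2_eq_square)
  finally have f1: "F (z 1) \<le> F x0 - \<gamma>0\<^sup>2 / (2 * \<nu>b * \<gamma>1\<^sup>2) * gn\<^sup>2" .
  have "F (z J) \<le> F (z 1)" using mono J by simp
  then show "F (x0 + D *v u J) \<le> F x0 - \<gamma>0\<^sup>2 / (2 * \<nu>b * \<gamma>1\<^sup>2) * (norm (G x0))\<^sup>2"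
    using f1 unfolding z_def gn_def by simp
  \<comment> \<open>length\<close>
  define b where "b = sqrt (2 / \<nu> * (F x0 - F (z J)))"
  have each: "norm (z (Suc j) - z j) \<le> b" if "j < J" for j
  proof -
    have "\<nu> / 2 * (norm (z (Suc j) - z j))\<^sup>2 \<le> F (z j) - F (z (Suc j))" using dec[of "Suc j"] that by simp
    also have "\<dots> \<le> F x0 - F (z J)" using mono[of 0 j] mono[of "Suc j" J] that z0 by simp
    finally have "(norm (z (Suc j) - z j))\<^sup>2 \<le> 2 / \<nu> * (F x0 - F (z J))"
      using nu_pos by (simp add: field_simps)
    then show ?thesis unfolding b_def by (rule real_le_rsqrt)
  qed
  have "D *v u J = z J - z 0" unfolding z_def u0 by simp
  also have "\<dots> = (\<Sum>j<J. z (Suc j) - z j)" by (rule sum_lessThan_telescope[symmetric])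
  finally have "norm (D *v u J) \<le> (\<Sum>j<J. norm (z (Suc j) - z j))" using norm_sum by metis
  also have "\<dots> \<le> J * b" using sum_bounded_above[of "{..<J}" "\<lambda>j. norm (z (Suc j) - z j)" b] each by simp
  finally show "norm (D *v u J) \<le> J * sqrt (2 / \<nu> * (F x0 - F (x0 + D *v u J)))"
    unfolding b_def z_def by simp
qed
end



locale mm2 = mm F G A \<nu> \<nu>b for F G A \<nu> \<nu>b +
  assumes gd: "\<And>z. GDERIV F z :> G z"
    and contF: "continuous_on UNIV F"
    and lev: "\<And>c. bounded {z. F z \<le> c}"
    and KLG: "\<And>xt E. bounded E \<Longrightarrow> (\<exists>U. open U \<and> xt \<in> U \<and> U \<subseteq> E) \<Longrightarrow>
       (\<exists>\<kappa>>0. \<exists>\<zeta>>0. \<exists>\<theta>. 0 \<le> \<theta> \<and> \<theta> < 1 \<and>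
        (\<forall>x\<in>E. \<bar>F x - F xt\<bar> < \<zeta> \<longrightarrow> norm (G x) \<ge> \<kappa> * \<bar>F x - F xt\<bar> powr \<theta>))"
begin

lemma crit_from_upper:
  assumes U: "\<And>y. F y \<le> F xt + \<nu>b / 2 * (norm (y - xt))\<^sup>2"
  shows "G xt = 0"
proof -
  define g where "g = G xt"
  have d: "((\<lambda>t. F (xt + t *\<^sub>R g)) has_real_derivative (g \<bullet> g)) (at 0)"
    using line_deriv[of F xt 0 g g] gd unfolding g_def by simp
  then have "((\<lambda>t. (F (xt + t *\<^sub>R g) - F (xt + 0 *\<^sub>R g)) / (t - 0)) \<longlongrightarrow> g \<bullet> g) (at 0)"
    unfolding has_field_derivative_iff .
  then have L: "((\<lambda>t. (F (xt + t *\<^sub>R g) - F xt) / t) \<longlongrightarrow> g \<bullet> g) (at_right 0)"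
    by (simp add: filterlim_at_split)
  have L2: "((\<lambda>t. \<nu>b / 2 * t * (norm g)\<^sup>2) \<longlongrightarrow> 0) (at_right 0)"
    by (auto intro!: tendsto_eq_intros)
  have E: "eventually (\<lambda>t. (F (xt + t *\<^sub>R g) - F xt) / t \<le> \<nu>b / 2 * t * (norm g)\<^sup>2) (at_right 0)"
  proof -
    have "(F (xt + t *\<^sub>R g) - F xt) / t \<le> \<nu>b / 2 * t * (norm g)\<^sup>2" if t: "0 < t" for t
    proof -
    have "F (xt + t *\<^sub>R g) - F xt \<le> \<nu>b / 2 * (norm (t *\<^sub>R g))\<^sup>2" using U[of "xt + t *\<^sub>R g"] by simp
    also have "\<dots> = t * (\<nu>b / 2 * t * (norm g)\<^sup>2)" using t by (simp add: power_mult_distrib power2_eq_square)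
    finally show "(F (xt + t *\<^sub>R g) - F xt) / t \<le> \<nu>b / 2 * t * (norm g)\<^sup>2"
      using t by (simp add: divide_simps mult.commute)
    qed
    then show ?thesis unfolding eventually_at_right_field by (intro exI[of _ 1]) auto
  qed
  have "g \<bullet> g \<le> 0" using tendsto_le[OF _ L2 L E] by simp
  then show ?thesis unfolding g_def using inner_ge_zero[of "G xt"] inner_eq_zero_iff[of "G xt"] by linarith
qed

end



context mm2 begin

lemma converge:
  fixes x :: "nat \<Rightarrow> real^'a" and D :: "nat \<Rightarrow> real^'m^'a" and u :: "nat \<Rightarrow> nat \<Rightarrow> real^'m" and j1 :: 'm
  assumes J: "J \<ge> 1" and u0: "\<And>k. u k 0 = 0"
    and uj: "\<And>k j. 1 \<le> j \<Longrightarrow> j \<le> J \<Longrightarrow> u k j = u k (j - 1)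
         - pinv (transpose (D k) ** A (x k + D k *v u k (j - 1)) ** D k) *v (transpose (D k) *v G (x k + D k *v u k (j - 1)))"
    and xstep: "\<And>k. x (Suc k) = x k + D k *v u k J"
    and A4: "\<exists>\<gamma>0>0. \<exists>\<gamma>1>0. \<forall>k. G (x k) \<bullet> column j1 (D k) \<le> - \<gamma>0 * (norm (G (x k)))\<^sup>2 \<and>
       norm (column j1 (D k)) \<le> \<gamma>1 * norm (G (x k))"
  shows "\<exists>xt. x \<longlonglongrightarrow> xt \<and> G xt = 0 \<and> summable (\<lambda>k. norm (x (Suc k) - x k))"
proof -
  obtain \<gamma>0 \<gamma>1 where g: "\<gamma>0 > 0" "\<gamma>1 > 0" and A4k: "\<And>k. G (x k) \<bullet> column j1 (D k) \<le> - \<gamma>0 * (norm (G (x k)))\<^sup>2"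
    "\<And>k. norm (column j1 (D k)) \<le> \<gamma>1 * norm (G (x k))" using A4 by blast
  define a where "a = \<gamma>0\<^sup>2 / (2 * \<nu>b * \<gamma>1\<^sup>2)"
  have a: "a > 0" unfolding a_def using g nub_pos by simp
  define c2 where "c2 = real J * sqrt (2 / \<nu>)"
  have c2: "c2 \<ge> 0" unfolding c2_def using nu_pos by simp
  define f where "f k = F (x k)" for k
  have dec: "f (Suc k) \<le> f k - a * (norm (G (x k)))\<^sup>2" for k
    using inner_iter(1)[of "u k" J "D k" "x k" j1 \<gamma>0 \<gamma>1] u0 uj J A4k g xstep unfolding f_def a_def
    by simp
  have stp: "norm (x (Suc k) - x k) \<le> c2 * sqrt (f k - f (Suc k))" for k
  proof -
    have "norm (D k *v u k J) \<le> J * sqrt (2 / \<nu> * (F (x k) - F (x k + D k *v u k J)))"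
      using inner_iter(2)[of "u k" J "D k" "x k" j1 \<gamma>0 \<gamma>1] u0 uj J A4k g by simp
    moreover have "x (Suc k) - x k = D k *v u k J" using xstep by simp
    moreover have "real J * sqrt (2 / \<nu> * (F (x k) - F (x k + D k *v u k J)))
        = c2 * sqrt (f k - f (Suc k))" unfolding c2_def f_def xstep by (simp only: real_sqrt_mult mult.assoc)
    ultimately show ?thesis by simp
  qed
  have fdec: "f (Suc k) \<le> f k" for k using dec[of k] a by (smt (verit) mult_nonneg_nonneg zero_le_power2)
  have decseq_f: "decseq f" by (rule decseq_SucI) (use fdec in auto)
  have lvl: "x k \<in> {z. F z \<le> F (x 0)}" for k
    using decseq_f unfolding decseq_def f_def by auto
  have bx: "bounded (range x)" using lev[of "F (x 0)"] lvl by (meson bounded_subset image_subset_iff)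
  obtain xb r where r: "strict_mono r" "(x \<circ> r) \<longlonglongrightarrow> xb"
    using bounded_imp_convergent_subsequence[OF bx] by blast
  have cF: "isCont F z" for z using contF by (simp add: continuous_on_eq_continuous_at)
  have fr: "(f \<circ> r) \<longlonglongrightarrow> F xb"
    using isCont_tendsto_compose[OF cF r(2)] unfolding f_def by (simp add: comp_def)
  have decr: "decseq (f \<circ> r)" using decseq_f r(1) unfolding decseq_def strict_mono_def
    by (metis comp_apply monoD strict_mono_mono r(1))
  have lb: "F xb \<le> f k" for k
  proof -
    have "F xb \<le> (f \<circ> r) k" by (rule decseq_ge[OF decr fr])
    also have "\<dots> \<le> f k" using decseq_f seq_suble[OF r(1), of k] unfolding decseq_def by simp
    finally show ?thesis .
  qed
  obtain L where L: "f \<longlonglongrightarrow> L" using decseq_convergent[OF decseq_f, of "F xb"] lb by blast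
  have "L = F xb" using LIMSEQ_unique[OF LIMSEQ_subseq_LIMSEQ[OF L r(1)] fr] .
  with L have fl: "f \<longlonglongrightarrow> F xb" by simp
  define Fs where "Fs = F xb"
  \<comment> \<open>KL\<close>
  obtain b where b: "b > 0" "\<And>k. norm (x k) \<le> b" using bx unfolding bounded_pos by auto
  define R where "R = b + norm xb + 1"
  have inE: "x k \<in> ball xb R" for k
  proof -
    have "norm (x k - xb) \<le> norm (x k) + norm xb" by (rule norm_triangle_ineq4)
    then have "norm (x k - xb) < R" using b(2)[of k] unfolding R_def by simp
    then show ?thesis by (simp add: dist_norm norm_minus_commute)
  qed
  obtain \<kappa> \<zeta> \<theta> where kl: "\<kappa> > 0" "\<zeta> > 0" "0 \<le> \<theta>" "\<theta> < 1"
    "\<And>z. z \<in> ball xb R \<Longrightarrow> \<bar>F z - F xb\<bar> < \<zeta> \<Longrightarrow> norm (G z) \<ge> \<kappa> * \<bar>F z - F xb\<bar> powr \<theta>"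
  proof -
    have "bounded (ball xb R)" by simp
    moreover have "\<exists>U. open U \<and> xb \<in> U \<and> U \<subseteq> ball xb R"
    proof (intro exI[of _ "ball xb R"] conjI)
      have "0 \<le> norm xb" by simp
      then have "R > 0" using b(1) unfolding R_def by linarith
      then show "xb \<in> ball xb R" by simp
    qed auto
    ultimately show ?thesis using KLG[of "ball xb R" xb] that by blast
  qed
  have "eventually (\<lambda>k. f k < Fs + \<zeta>) sequentially"
    using order_tendstoD(2)[OF fl, of "Fs + \<zeta>"] kl(2) unfolding Fs_def by simp
  then obtain K where K: "\<And>k. k \<ge> K \<Longrightarrow> f k < Fs + \<zeta>" by (auto simp: eventually_sequentially)
  define C where "C = c2 / ((1 - \<theta>) * \<kappa> * sqrt a)"
  define \<phi> where "\<phi> k = (f k - Fs) powr (1 - \<theta>)" for k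
  have bnd: "norm (x (Suc k) - x k) \<le> C * (\<phi> k - \<phi> (Suc k))" if "k \<ge> K" for k
  proof -
    have lbk: "Fs \<le> f (Suc k)" "Fs \<le> f k" using lb unfolding Fs_def by auto
    have klk: "norm (G (x k)) \<ge> \<kappa> * \<bar>F (x k) - F xb\<bar> powr \<theta>"
      using kl(5)[OF inE[of k]] K[OF that] lbk unfolding f_def Fs_def by simp
    show ?thesis unfolding C_def \<phi>_def
    proof (rule kl_scalar)
      show "0 \<le> f (Suc k) - Fs" "f (Suc k) - Fs \<le> f k - Fs" using lbk fdec[of k] by auto
      show "a > 0" "\<kappa> > 0" "0 \<le> \<theta>" "\<theta> < 1" "c2 \<ge> 0" "norm (G (x k)) \<ge> 0" using a kl c2 by auto
      show "a * (norm (G (x k)))\<^sup>2 \<le> f k - Fs - (f (Suc k) - Fs)" using dec[of k] by simp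
      show "\<kappa> * (f k - Fs) powr \<theta> \<le> norm (G (x k))" using klk lbk unfolding f_def Fs_def by simp
      show "norm (x (Suc k) - x k) \<le> c2 * sqrt (f k - Fs - (f (Suc k) - Fs))" using stp[of k] by simp
    qed
  qed
  have phi0: "\<phi> \<longlonglongrightarrow> 0"
    unfolding \<phi>_def
  proof (rule tendsto_zero_powrI)
    show "(\<lambda>k. f k - Fs) \<longlonglongrightarrow> 0" using fl unfolding Fs_def by (simp add: LIM_zero)
    show "(\<lambda>k. 1 - \<theta>) \<longlonglongrightarrow> 1 - \<theta>" by simp
    show "\<forall>\<^sub>F k in sequentially. 0 \<le> f k - Fs" using lb unfolding Fs_def by simp
    show "0 < 1 - \<theta>" using kl by simp
  qed
  have sphi: "summable (\<lambda>k. C * (\<phi> k - \<phi> (Suc k)))"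
    by (rule summable_mult[OF telescope_summable'[OF phi0]])
  have sumx: "summable (\<lambda>k. norm (x (Suc k) - x k))"
    by (rule summable_comparison_test'[OF sphi, of K]) (use bnd in simp)
  \<comment> \<open>convergence\<close>
  have "summable (\<lambda>k. x (Suc k) - x k)" by (rule summable_norm_cancel[OF sumx])
  then have "(\<lambda>n. \<Sum>k<n. x (Suc k) - x k) \<longlonglongrightarrow> (\<Sum>k. x (Suc k) - x k)" by (rule summable_LIMSEQ)
  then have "(\<lambda>n. x 0 + (\<Sum>k<n. x (Suc k) - x k)) \<longlonglongrightarrow> x 0 + (\<Sum>k. x (Suc k) - x k)"
    by (intro tendsto_add tendsto_const)
  moreover have "x 0 + (\<Sum>k<n. x (Suc k) - x k) = x n" for n by (simp add: sum_lessThan_telescope)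
  ultimately have xl: "x \<longlonglongrightarrow> x 0 + (\<Sum>k. x (Suc k) - x k)" by simp
  define xt where "xt = x 0 + (\<Sum>k. x (Suc k) - x k)"
  have xl: "x \<longlonglongrightarrow> xt" using xl unfolding xt_def .
  \<comment> \<open>criticality\<close>
  have g0: "(\<lambda>k. G (x k)) \<longlonglongrightarrow> 0"
  proof -
    have d0: "(\<lambda>k. (f k - f (Suc k)) / a) \<longlonglongrightarrow> 0"
    proof -
      have "(\<lambda>k. f k - f (Suc k)) \<longlonglongrightarrow> F xb - F xb"
        by (intro tendsto_diff fl) (use fl LIMSEQ_Suc in auto)
      then show ?thesis by (auto intro: tendsto_divide_zero)
    qed
    have "(\<lambda>k. (norm (G (x k)))\<^sup>2) \<longlonglongrightarrow> 0"
    proof (rule Lim_null_comparison[OF _ d0])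
      show "\<forall>\<^sub>F k in sequentially. norm ((norm (G (x k)))\<^sup>2) \<le> (f k - f (Suc k)) / a"
        using dec a by (auto simp: field_simps mult.commute)
    qed
    then have "(\<lambda>k. sqrt ((norm (G (x k)))\<^sup>2)) \<longlonglongrightarrow> sqrt 0" by (rule tendsto_real_sqrt)
    then have "(\<lambda>k. norm (G (x k))) \<longlonglongrightarrow> 0" by simp
    then show ?thesis by (simp add: tendsto_norm_zero_iff)
  qed
  have U: "F y \<le> F xt + \<nu>b / 2 * (norm (y - xt))\<^sup>2" for y
  proof -
    have mk: "F y \<le> F (x k) + G (x k) \<bullet> (y - x k) + \<nu>b / 2 * (norm (y - x k))\<^sup>2" for k
    proof -
      have "F (x k + (y - x k)) \<le> F (x k) + G (x k) \<bullet> (y - x k) + 1/2 * ((y - x k) \<bullet> (A (x k) *v (y - x k)))"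
        by (rule major)
      moreover have "(y - x k) \<bullet> (A (x k) *v (y - x k)) \<le> \<nu>b * (norm (y - x k))\<^sup>2" by (rule up)
      ultimately show ?thesis by simp
    qed
    have lim: "(\<lambda>k. F (x k) + G (x k) \<bullet> (y - x k) + \<nu>b / 2 * (norm (y - x k))\<^sup>2)
        \<longlonglongrightarrow> F xt + 0 \<bullet> (y - xt) + \<nu>b / 2 * (norm (y - xt))\<^sup>2"
      by (intro tendsto_intros isCont_tendsto_compose[OF cF xl] g0 xl)
    show ?thesis using LIMSEQ_le_const[OF lim] mk by simp
  qed
  have "G xt = 0" by (rule crit_from_upper[OF U])
  then show ?thesis using xl sumx by blast
qed
end



lemma transpose_add: "transpose (X + Y :: real^'a^'b) = transpose X + transpose Y"
  by (simp add: transpose_def vec_eq_iff)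

lemma transpose_Diag: "transpose (Diag b) = Diag b"
  by (simp add: transpose_def Diag_def vec_eq_iff)

lemma Diag_mv: "Diag b *v v = (\<chi> i. b $ i * v $ i)"
proof -
  have e: "(if P then a else 0) * c = (if P then a * c else (0::real))" for P a c by simp
  show ?thesis by (simp add: Diag_def matrix_vector_mult_def vec_eq_iff e)
qed

lemma norm_sq_sum: "(norm (v::real^'a))\<^sup>2 = (\<Sum>i\<in>UNIV. (v $ i)\<^sup>2)"
  unfolding power2_norm_eq_inner inner_vec_def by (simp add: power2_eq_square)

lemma inner_sum: "(u::real^'a) \<bullet> v = (\<Sum>i\<in>UNIV. u $ i * v $ i)"
  by (simp add: inner_vec_def)

definition Msel :: "('p \<Rightarrow> 's) \<Rightarrow> real^'n^'p \<Rightarrow> 's \<Rightarrow> real^'n^'p" where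
  "Msel grp V s = (\<chi> p. if grp p = s then V $ p else 0)"
definition csel :: "('p \<Rightarrow> 's) \<Rightarrow> real^'p \<Rightarrow> 's \<Rightarrow> real^'p" where
  "csel grp c s = (\<chi> p. if grp p = s then c $ p else 0)"

lemma Msel_comp: "(Msel grp V s *v x - csel grp c s) $ p = (if grp p = s then (V *v x - c) $ p else 0)"
  by (simp add: Msel_def csel_def matrix_vector_mult_def)

lemma Msel_comp0: "(Msel grp V s *v d) $ p = (if grp p = s then (V *v d) $ p else 0)"
  by (simp add: Msel_def matrix_vector_mult_def)

lemma blocknorm_eq:
  fixes grp :: "'p::finite \<Rightarrow> 's"
  shows "blocknorm grp V c s x = norm (Msel grp V s *v x - csel grp c s)"
proof -
  have "(norm (Msel grp V s *v x - csel grp c s))\<^sup>2 = (\<Sum>p\<in>UNIV. (if grp p = s then ((V *v x - c) $ p)\<^sup>2 else 0))"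
    unfolding norm_sq_sum Msel_comp by (intro sum.cong) auto
  also have "\<dots> = (\<Sum>p\<in>{p. grp p = s}. ((V *v x - c) $ p)\<^sup>2)"
    using sum.inter_filter[of UNIV "\<lambda>p. ((V *v x - c) $ p)\<^sup>2" "\<lambda>p. grp p = s"] by simp
  finally show ?thesis unfolding blocknorm_def by (metis norm_ge_zero real_sqrt_abs real_sqrt_power abs_of_nonneg power2_eq_square real_sqrt_mult_self)
qed

lemma Msel_sq:
  fixes grp :: "'p::finite \<Rightarrow> 's::finite"
  shows "(\<Sum>s\<in>UNIV. w s * (norm (Msel grp V s *v d))\<^sup>2) = (\<Sum>p\<in>UNIV. w (grp p) * ((V *v d) $ p)\<^sup>2)"
proof -
  have "(\<Sum>s\<in>UNIV. w s * (norm (Msel grp V s *v d))\<^sup>2)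
      = (\<Sum>s\<in>UNIV. \<Sum>p\<in>UNIV. if grp p = s then w s * ((V *v d) $ p)\<^sup>2 else 0)"
    unfolding norm_sq_sum Msel_comp0 sum_distrib_left by (intro sum.cong) auto
  also have "\<dots> = (\<Sum>p\<in>UNIV. \<Sum>s\<in>UNIV. if grp p = s then w s * ((V *v d) $ p)\<^sup>2 else 0)"
    by (rule sum.swap)
  also have "\<dots> = (\<Sum>p\<in>UNIV. w (grp p) * ((V *v d) $ p)\<^sup>2)"
    by (intro sum.cong) (auto simp: eq_commute[of "grp _"] sum.delta)
  finally show ?thesis .
qed

lemma Amat_quad:
  "d \<bullet> (Amat \<mu> H V0 grp V c \<psi> \<delta> x *v d) = \<mu> * (norm (H *v d))\<^sup>2 + 2 * (norm (V0 *v d))\<^sup>2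
     + (\<Sum>p\<in>UNIV. omega (\<psi> (grp p) \<delta>) (blocknorm grp V c (grp p) x) * ((V *v d) $ p)\<^sup>2)"
proof -
  define b where "b = (\<chi> p. omega (\<psi> (grp p) \<delta>) (blocknorm grp V c (grp p) x))"
  have "Amat \<mu> H V0 grp V c \<psi> \<delta> x *v d = \<mu> *\<^sub>R (transpose H *v (H *v d)) + 2 *\<^sub>R (transpose V0 *v (V0 *v d))
       + transpose V *v (Diag b *v (V *v d))"
    unfolding Amat_def b_def
    by (simp only: matrix_vector_mult_add_rdistrib scaleR_matrix_vector_assoc[symmetric] matrix_vector_mul_assoc matrix_mul_assoc)
  then have "d \<bullet> (Amat \<mu> H V0 grp V c \<psi> \<delta> x *v d) = \<mu> * (d \<bullet> (transpose H *v (H *v d))) + 2 * (d \<bullet> (transpose V0 *v (V0 *v d)))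
       + d \<bullet> (transpose V *v (Diag b *v (V *v d)))"
    by (simp add: inner_add_right)
  also have "d \<bullet> (transpose H *v (H *v d)) = (norm (H *v d))\<^sup>2"
    by (metis dot_mv power2_norm_eq_inner)
  also have "d \<bullet> (transpose V0 *v (V0 *v d)) = (norm (V0 *v d))\<^sup>2"
    by (metis dot_mv power2_norm_eq_inner)
  also have "d \<bullet> (transpose V *v (Diag b *v (V *v d))) = (V *v d) \<bullet> (Diag b *v (V *v d))"
    by (metis dot_mv)
  also have "\<dots> = (\<Sum>p\<in>UNIV. omega (\<psi> (grp p) \<delta>) (blocknorm grp V c (grp p) x) * ((V *v d) $ p)\<^sup>2)"
    unfolding inner_sum Diag_mv b_def by (intro sum.cong) (auto simp: power2_eq_square)
  finally show ?thesis .
qed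

lemma Amat_sym: "transpose (Amat \<mu> H V0 grp V c \<psi> \<delta> x) = Amat \<mu> H V0 grp V c \<psi> \<delta> x"
  unfolding Amat_def
  by (simp add: transpose_add transpose_scalar matrix_transpose_mul transpose_Diag matrix_mul_assoc)




locale conc =
  fixes H :: "real^'n^'q" and y :: "real^'q" and V0 :: "real^'n^'r"
    and grp :: "'p::finite \<Rightarrow> 's::finite" and V :: "real^'n^'p" and c :: "real^'p"
    and \<Phi> :: "real^'q \<Rightarrow> real" and \<psi> :: "'s \<Rightarrow> real \<Rightarrow> real \<Rightarrow> real"
    and \<delta> L \<mu> :: real and \<omega>b :: "'s \<Rightarrow> real"
  assumes Phi_cont: "continuous_on UNIV \<Phi>" and Phi_coer: "coercive \<Phi>"
    and psi_cont: "\<And>s d. d > 0 \<Longrightarrow> continuous_on UNIV (\<psi> s d) \<and> (\<forall>t. \<psi> s d t \<ge> 0)"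
    and ker: "\<And>z. H *v z = 0 \<Longrightarrow> V0 *v z = 0 \<Longrightarrow> z = 0"
    and delta_pos: "\<delta> > 0"
    and gPhi: "\<And>z. GDERIV \<Phi> z :> grad \<Phi> z"
    and Lip: "\<And>z w. norm (grad \<Phi> z - grad \<Phi> w) \<le> L * norm (z - w)"
    and psi_diff: "\<And>s t. \<psi> s \<delta> differentiable (at t)"
    and psi_conc: "\<And>s. concave_on {0..} (\<lambda>t. \<psi> s \<delta> (sqrt t))"
    and psi_d: "\<And>s t. t > 0 \<Longrightarrow> 0 \<le> deriv (\<psi> s \<delta>) t \<and> deriv (\<psi> s \<delta>) t \<le> \<omega>b s * t"
    and psi_lim: "\<And>s. \<exists>l::real. ((\<lambda>t. deriv (\<psi> s \<delta>) t / t) \<longlongrightarrow> l) (at 0)"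
    and mu: "\<mu> \<ge> L"
begin

lemma pok: "psi_ok (\<psi> s \<delta>) (\<omega>b s)"
  by unfold_locales (use psi_diff psi_conc psi_d psi_lim in auto)

abbreviation "Ms \<equiv> Msel grp V"
abbreviation "cs \<equiv> csel grp c"

definition FF where "FF = Fdelta \<Phi> H y V0 grp V c \<psi> \<delta>"
definition AA where "AA = Amat \<mu> H V0 grp V c \<psi> \<delta>"
definition om where "om s x = omega (\<psi> s \<delta>) (norm (Ms s *v x - cs s))"
definition GG where "GG x = transpose H *v grad \<Phi> (H *v x - y)
   + (\<Sum>s\<in>UNIV. om s x *\<^sub>R (transpose (Ms s) *v (Ms s *v x - cs s)))
   + 2 *\<^sub>R (transpose V0 *v (V0 *v x))"

lemma FF_eq: "FF x = \<Phi> (H *v x - y) + (\<Sum>s\<in>UNIV. \<psi> s \<delta> (norm (Ms s *v x - cs s))) + (norm (V0 *v x))\<^sup>2"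
  unfolding FF_def Fdelta_def blocknorm_eq ..

lemma GG_deriv: "GDERIV FF x :> GG x"
proof -
  have l: "((\<lambda>x. H *v x - y) has_derivative (\<lambda>h. H *v h)) (at x)"
    by (auto intro!: derivative_eq_intros linear_imp_has_derivative)
  have d1: "((\<lambda>x. \<Phi> (H *v x - y)) has_derivative (\<lambda>h. (H *v h) \<bullet> grad \<Phi> (H *v x - y))) (at x)"
    using has_derivative_compose[OF l gPhi[unfolded gderiv_def]] by simp
  have d2: "((\<lambda>x. \<Sum>s\<in>UNIV. \<psi> s \<delta> (norm (Ms s *v x - cs s))) has_derivative
      (\<lambda>h. \<Sum>s\<in>UNIV. h \<bullet> (om s x *\<^sub>R (transpose (Ms s) *v (Ms s *v x - cs s))))) (at x)"
    by (rule has_derivative_sum) (use psi_ok.vec_gderiv[OF pok] in \<open>simp add: gderiv_def om_def\<close>)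
  have l0: "((\<lambda>x. V0 *v x) has_derivative (\<lambda>h. V0 *v h)) (at x)"
    by (auto intro!: linear_imp_has_derivative)
  have d3: "((\<lambda>x. (norm (V0 *v x))\<^sup>2) has_derivative (\<lambda>h. 2 *\<^sub>R ((V0 *v x) \<bullet> (V0 *v h)))) (at x)"
    using has_derivative_compose[OF l0 has_derivative_sqnorm_at[of "V0 *v x"]] by simp
  have "((\<lambda>x. \<Phi> (H *v x - y) + (\<Sum>s\<in>UNIV. \<psi> s \<delta> (norm (Ms s *v x - cs s))) + (norm (V0 *v x))\<^sup>2)
     has_derivative (\<lambda>h. (H *v h) \<bullet> grad \<Phi> (H *v x - y) + (\<Sum>s\<in>UNIV. h \<bullet> (om s x *\<^sub>R (transpose (Ms s) *v (Ms s *v x - cs s))))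
        + 2 *\<^sub>R ((V0 *v x) \<bullet> (V0 *v h)))) (at x)"
    by (intro has_derivative_add d1 d2 d3)
  then have "(FF has_derivative (\<lambda>h. h \<bullet> GG x)) (at x)"
    unfolding FF_eq[abs_def]
  proof (rule has_derivative_eq_rhs)
    show "(\<lambda>h. (H *v h) \<bullet> grad \<Phi> (H *v x - y) + (\<Sum>s\<in>UNIV. h \<bullet> (om s x *\<^sub>R (transpose (Ms s) *v (Ms s *v x - cs s))))
        + 2 *\<^sub>R ((V0 *v x) \<bullet> (V0 *v h))) = (\<lambda>h. h \<bullet> GG x)"
    proof
      fix h
      have "(H *v h) \<bullet> grad \<Phi> (H *v x - y) = h \<bullet> (transpose H *v grad \<Phi> (H *v x - y))" by (rule dot_mv)
      moreover have "(V0 *v x) \<bullet> (V0 *v h) = h \<bullet> (transpose V0 *v (V0 *v x))"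
        by (metis dot_mv inner_commute)
      ultimately show "(H *v h) \<bullet> grad \<Phi> (H *v x - y) + (\<Sum>s\<in>UNIV. h \<bullet> (om s x *\<^sub>R (transpose (Ms s) *v (Ms s *v x - cs s))))
        + 2 *\<^sub>R ((V0 *v x) \<bullet> (V0 *v h)) = h \<bullet> GG x"
        unfolding GG_def by (simp add: inner_add_right inner_sum_right)
    qed
  qed
  then show ?thesis unfolding gderiv_def .
qed

lemma grad_FF: "grad FF x = GG x"
proof -
  have "GDERIV FF x :> D \<Longrightarrow> D = GG x" for D
  proof -
    assume "GDERIV FF x :> D"
    then have "(\<lambda>h. h \<bullet> D) = (\<lambda>h. h \<bullet> GG x)"
      using has_derivative_unique GG_deriv unfolding gderiv_def by blast
    then have "(D - GG x) \<bullet> D = (D - GG x) \<bullet> GG x" by metis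
    then have "(D - GG x) \<bullet> (D - GG x) = 0" by (simp add: inner_diff_right)
    then show "D = GG x" by simp
  qed
  then show ?thesis unfolding grad_def using GG_deriv by (intro the_equality) auto
qed

end



lemma mv_cont: "continuous_on S (\<lambda>d. (M::real^'a^'b) *v d)"
  by (rule linear_continuous_on) (simp add: linear_conv_bounded_linear)

lemma blocknorm_nonneg: "0 \<le> blocknorm grp V c s x"
  unfolding blocknorm_def by (intro real_sqrt_ge_zero sum_nonneg) auto

context conc begin

lemma L_pos: "L > 0"
proof (rule ccontr)
  assume "\<not> L > 0"
  then have L0: "L \<le> 0" by simp
  define g0 where "g0 = grad \<Phi> 0"
  have const: "grad \<Phi> z = g0" for z
  proof -
    have "norm (grad \<Phi> z - grad \<Phi> 0) \<le> L * norm (z - 0)" by (rule Lip)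
    also have "\<dots> \<le> 0" using L0 by (simp add: mult_nonpos_nonneg)
    finally show ?thesis unfolding g0_def by simp
  qed
  have up: "\<Phi> e \<le> \<Phi> 0 + g0 \<bullet> e" for e
  proof -
    have "\<Phi> (0 + e) \<le> \<Phi> 0 + grad \<Phi> 0 \<bullet> e + L / 2 * (norm e)\<^sup>2"
      by (rule descent_lemma[OF gPhi Lip])
    moreover have "L / 2 * (norm e)\<^sup>2 \<le> 0" using L0 by (simp add: mult_nonpos_nonneg)
    ultimately show ?thesis unfolding g0_def by simp
  qed
  obtain i :: 'q where True by blast
  define v where "v = (if g0 = 0 then axis i 1 else - g0)"
  have v0: "v \<noteq> 0" unfolding v_def by (auto simp: axis_eq_0_iff)
  have gv: "g0 \<bullet> v \<le> 0" unfolding v_def by auto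
  have le: "\<Phi> (real n *\<^sub>R v) \<le> \<Phi> 0" for n
  proof -
    have "g0 \<bullet> (real n *\<^sub>R v) = real n * (g0 \<bullet> v)" by simp
    also have "\<dots> \<le> 0" using gv by (simp add: mult_nonneg_nonpos)
    finally show ?thesis using up[of "real n *\<^sub>R v"] by simp
  qed
  have "filterlim (\<lambda>n. norm v * real n) at_top sequentially"
    by (rule filterlim_tendsto_pos_mult_at_top[OF tendsto_const _ filterlim_real_sequentially]) (use v0 in simp)
  then have "filterlim (\<lambda>n. real n *\<^sub>R v) at_infinity sequentially"
    unfolding filterlim_at_infinity_conv_norm_at_top by (simp add: mult.commute)
  then have "filterlim (\<lambda>n. \<Phi> (real n *\<^sub>R v)) at_top sequentially"
    using Phi_coer unfolding coercive_def by (rule filterlim_compose[rotated])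
  then have "eventually (\<lambda>n. \<Phi> 0 + 1 \<le> \<Phi> (real n *\<^sub>R v)) sequentially"
    unfolding filterlim_at_top by blast
  then obtain n where "\<Phi> 0 + 1 \<le> \<Phi> (real n *\<^sub>R v)" by (auto simp: eventually_sequentially)
  with le[of n] show False by simp
qed

lemma mu_pos: "\<mu> > 0" using L_pos mu by simp

definition Q where "Q d = \<mu> * (norm (H *v d))\<^sup>2 + 2 * (norm (V0 *v d))\<^sup>2"

lemma Q_pd: "\<exists>\<nu>>0. \<forall>d. \<nu> * (norm d)\<^sup>2 \<le> Q d"
proof -
  obtain i :: 'n where True by blast
  have ne: "sphere (0::real^'n) 1 \<noteq> {}" by (intro notI) (metis empty_iff mem_sphere_0 norm_axis_1)
  have cQ: "continuous_on (sphere 0 1) Q" unfolding Q_def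
    by (intro continuous_intros mv_cont)
  obtain d0 where d0: "d0 \<in> sphere 0 1" "\<And>d. d \<in> sphere 0 1 \<Longrightarrow> Q d0 \<le> Q d"
    using continuous_attains_inf[OF compact_sphere ne cQ] by blast
  have "Q d0 > 0"
  proof (rule ccontr)
    assume "\<not> Q d0 > 0"
    moreover have "\<mu> * (norm (H *v d0))\<^sup>2 \<ge> 0" using mu_pos by simp
    moreover have "0 \<le> 2 * (norm (V0 *v d0))\<^sup>2" by simp
    ultimately have "\<mu> * (norm (H *v d0))\<^sup>2 = 0" "(norm (V0 *v d0))\<^sup>2 = 0" unfolding Q_def by linarith+
    then have "H *v d0 = 0" "V0 *v d0 = 0" using mu_pos by simp_all
    then have "d0 = 0" by (rule ker)
    then show False using d0(1) by simp
  qed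
  moreover have "Q d0 * (norm d)\<^sup>2 \<le> Q d" for d
  proof (cases "d = 0")
    case True then show ?thesis by (simp add: Q_def)
  next
    case False
    define e where "e = (1 / norm d) *\<^sub>R d"
    have e: "e \<in> sphere 0 1" using False unfolding e_def by simp
    have "Q d = (norm d)\<^sup>2 * Q e"
      unfolding Q_def e_def using False
      by (simp add: matrix_vector_mult_scaleR power_mult_distrib field_simps)
    moreover have "Q d0 * (norm d)\<^sup>2 \<le> Q e * (norm d)\<^sup>2" using d0(2)[OF e] by (rule mult_right_mono) simp
    ultimately show ?thesis by (simp add: mult.commute)
  qed
  ultimately show ?thesis by blast
qed

lemma om_nonneg: "0 \<le> omega (\<psi> s \<delta>) t" "omega (\<psi> s \<delta>) t \<le> \<omega>b s" if "t \<ge> 0"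
  using psi_ok.om_bnd[OF pok that] by auto

lemma wb_nn: "\<omega>b s \<ge> 0" using psi_ok.wb_nonneg[OF pok] .

lemma AA_quad: "d \<bullet> (AA x *v d) = Q d + (\<Sum>p\<in>UNIV. omega (\<psi> (grp p) \<delta>) (blocknorm grp V c (grp p) x) * ((V *v d) $ p)\<^sup>2)"
  unfolding AA_def Amat_quad Q_def by simp

lemma AA_low: "\<exists>\<nu>>0. \<forall>x d. \<nu> * (norm d)\<^sup>2 \<le> d \<bullet> (AA x *v d)"
proof -
  obtain \<nu> where \<nu>: "\<nu> > 0" "\<And>d. \<nu> * (norm d)\<^sup>2 \<le> Q d" using Q_pd by blast
  have "\<nu> * (norm d)\<^sup>2 \<le> d \<bullet> (AA x *v d)" for x d
  proof -
    have "0 \<le> (\<Sum>p\<in>UNIV. omega (\<psi> (grp p) \<delta>) (blocknorm grp V c (grp p) x) * ((V *v d) $ p)\<^sup>2)"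
      by (intro sum_nonneg mult_nonneg_nonneg om_nonneg blocknorm_nonneg) auto
    then show ?thesis using \<nu>(2)[of d] AA_quad by simp
  qed
  then show ?thesis using \<nu>(1) by blast
qed

lemma AA_up: "\<exists>\<nu>b. \<forall>x d. d \<bullet> (AA x *v d) \<le> \<nu>b * (norm d)\<^sup>2"
proof -
  obtain KH where KH: "\<And>v. norm (H *v v) \<le> KH * norm v" using mv_bound by blast
  obtain K0 where K0: "\<And>v. norm (V0 *v v) \<le> K0 * norm v" using mv_bound by blast
  obtain KV where KV: "\<And>v. norm (V *v v) \<le> KV * norm v" using mv_bound by blast
  define W where "W = (\<Sum>s\<in>UNIV. \<omega>b s)"
  have W: "\<omega>b s \<le> W" for s unfolding W_def by (rule member_le_sum) (auto simp: wb_nn)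
  have sq: "(norm (M *v d))\<^sup>2 \<le> K\<^sup>2 * (norm d)\<^sup>2" if "\<And>v. norm (M *v v) \<le> K * norm v" for M :: "real^'n^'z" and K d
  proof -
    have "(norm (M *v d))\<^sup>2 \<le> (K * norm d)\<^sup>2" using that[of d] by (simp add: power_mono)
    then show ?thesis by (simp add: power_mult_distrib)
  qed
  have "d \<bullet> (AA x *v d) \<le> (\<mu> * KH\<^sup>2 + 2 * K0\<^sup>2 + W * KV\<^sup>2) * (norm d)\<^sup>2" for x d
  proof -
    have "(\<Sum>p\<in>UNIV. omega (\<psi> (grp p) \<delta>) (blocknorm grp V c (grp p) x) * ((V *v d) $ p)\<^sup>2)
        \<le> (\<Sum>p\<in>UNIV. W * ((V *v d) $ p)\<^sup>2)"
    proof (intro sum_mono mult_right_mono)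
      fix p
      show "omega (\<psi> (grp p) \<delta>) (blocknorm grp V c (grp p) x) \<le> W"
        using om_nonneg(2)[OF blocknorm_nonneg, of "grp p" grp V c "grp p" x] W[of "grp p"] by simp
    qed simp
    also have "\<dots> = W * (norm (V *v d))\<^sup>2" by (simp add: norm_sq_sum sum_distrib_left)
    also have "\<dots> \<le> W * (KV\<^sup>2 * (norm d)\<^sup>2)"
      using sq[OF KV, of d] W[of undefined] wb_nn[of undefined] by (intro mult_left_mono) auto
    finally have 1: "(\<Sum>p\<in>UNIV. omega (\<psi> (grp p) \<delta>) (blocknorm grp V c (grp p) x) * ((V *v d) $ p)\<^sup>2)
        \<le> W * (KV\<^sup>2 * (norm d)\<^sup>2)" .
    have 2: "\<mu> * (norm (H *v d))\<^sup>2 \<le> \<mu> * (KH\<^sup>2 * (norm d)\<^sup>2)"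
      using sq[OF KH, of d] mu_pos by (intro mult_left_mono) auto
    have 3: "2 * (norm (V0 *v d))\<^sup>2 \<le> 2 * (K0\<^sup>2 * (norm d)\<^sup>2)" using sq[OF K0, of d] by simp
    show ?thesis using 1 2 3 unfolding AA_quad Q_def by (simp add: algebra_simps)
  qed
  then show ?thesis by blast
qed

lemma FF_major: "FF (x + d) \<le> FF x + GG x \<bullet> d + 1/2 * (d \<bullet> (AA x *v d))"
proof -
  have p1: "\<Phi> (H *v (x + d) - y) \<le> \<Phi> (H *v x - y) + (transpose H *v grad \<Phi> (H *v x - y)) \<bullet> d + \<mu> / 2 * (norm (H *v d))\<^sup>2"
  proof -
    have e: "H *v (x + d) - y = (H *v x - y) + H *v d" by (simp add: matrix_vector_right_distrib)
    have "\<Phi> ((H *v x - y) + H *v d) \<le> \<Phi> (H *v x - y) + grad \<Phi> (H *v x - y) \<bullet> (H *v d) + L / 2 * (norm (H *v d))\<^sup>2"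
      by (rule descent_lemma[OF gPhi Lip])
    moreover have "L / 2 * (norm (H *v d))\<^sup>2 \<le> \<mu> / 2 * (norm (H *v d))\<^sup>2"
      using mu by (intro mult_right_mono) auto
    moreover have "grad \<Phi> (H *v x - y) \<bullet> (H *v d) = (transpose H *v grad \<Phi> (H *v x - y)) \<bullet> d"
      by (metis dot_mv inner_commute)
    ultimately show ?thesis unfolding e by simp
  qed
  have p2: "(\<Sum>s\<in>UNIV. \<psi> s \<delta> (norm (Ms s *v (x + d) - cs s))) \<le> (\<Sum>s\<in>UNIV. \<psi> s \<delta> (norm (Ms s *v x - cs s)))
      + (\<Sum>s\<in>UNIV. om s x *\<^sub>R (transpose (Ms s) *v (Ms s *v x - cs s))) \<bullet> d
      + 1/2 * (\<Sum>p\<in>UNIV. omega (\<psi> (grp p) \<delta>) (blocknorm grp V c (grp p) x) * ((V *v d) $ p)\<^sup>2)"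
  proof -
    have "(\<Sum>s\<in>UNIV. \<psi> s \<delta> (norm (Ms s *v (x + d) - cs s))) \<le> (\<Sum>s\<in>UNIV. \<psi> s \<delta> (norm (Ms s *v x - cs s))
      + (om s x *\<^sub>R (transpose (Ms s) *v (Ms s *v x - cs s))) \<bullet> d + om s x / 2 * (norm (Ms s *v d))\<^sup>2)"
      by (intro sum_mono) (use psi_ok.vec_major[OF pok] in \<open>simp add: om_def\<close>)
    also have "\<dots> = (\<Sum>s\<in>UNIV. \<psi> s \<delta> (norm (Ms s *v x - cs s)))
      + (\<Sum>s\<in>UNIV. om s x *\<^sub>R (transpose (Ms s) *v (Ms s *v x - cs s))) \<bullet> d
      + 1/2 * (\<Sum>s\<in>UNIV. om s x * (norm (Ms s *v d))\<^sup>2)"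
      by (simp add: sum.distrib inner_sum_left sum_distrib_left)
    also have "(\<Sum>s\<in>UNIV. om s x * (norm (Ms s *v d))\<^sup>2) = (\<Sum>p\<in>UNIV. om (grp p) x * ((V *v d) $ p)\<^sup>2)"
      by (rule Msel_sq)
    also have "\<dots> = (\<Sum>p\<in>UNIV. omega (\<psi> (grp p) \<delta>) (blocknorm grp V c (grp p) x) * ((V *v d) $ p)\<^sup>2)"
      unfolding om_def blocknorm_eq ..
    finally show ?thesis .
  qed
  have p3: "(norm (V0 *v (x + d)))\<^sup>2 = (norm (V0 *v x))\<^sup>2 + (2 *\<^sub>R (transpose V0 *v (V0 *v x))) \<bullet> d + (norm (V0 *v d))\<^sup>2"
  proof -
    have "(V0 *v x) \<bullet> (V0 *v d) = (transpose V0 *v (V0 *v x)) \<bullet> d" by (metis dot_mv inner_commute)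
    then show ?thesis
      by (simp add: matrix_vector_right_distrib power2_norm_eq_inner inner_add_left inner_add_right inner_commute)
  qed
  show ?thesis
    unfolding FF_eq GG_def AA_quad Q_def inner_add_left using p1 p2 p3 by (simp add: algebra_simps)
qed

end



context conc begin

lemma Phi_lb: "\<exists>m. \<forall>z. m \<le> \<Phi> z"
proof -
  have "eventually (\<lambda>z. 0 \<le> \<Phi> z) at_infinity"
    using Phi_coer unfolding coercive_def filterlim_at_top by blast
  then obtain b where b: "\<And>z. b \<le> norm z \<Longrightarrow> 0 \<le> \<Phi> z" unfolding eventually_at_infinity by blast
  have ne: "cball (0::real^'q) (max b 0) \<noteq> {}" by simp
  obtain z0 where z0: "\<And>z. z \<in> cball 0 (max b 0) \<Longrightarrow> \<Phi> z0 \<le> \<Phi> z"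
    using continuous_attains_inf[OF compact_cball ne continuous_on_subset[OF Phi_cont]] by blast
  have "min 0 (\<Phi> z0) \<le> \<Phi> z" for z
  proof (cases "b \<le> norm z")
    case True then have "0 \<le> \<Phi> z" using b by blast
    then show ?thesis by simp
  next
    case False then have "z \<in> cball 0 (max b 0)" by simp
    then have "\<Phi> z0 \<le> \<Phi> z" using z0 by blast
    then show ?thesis by simp
  qed
  then show ?thesis by blast
qed

lemma FF_cont: "continuous_on UNIV FF"
proof (rule continuous_at_imp_continuous_on, rule ballI)
  fix x
  show "isCont FF x" using has_derivative_continuous GG_deriv unfolding gderiv_def by blast
qed

lemma FF_lev: "bounded {x. FF x \<le> C}"
proof -
  obtain m where m: "\<And>z. m \<le> \<Phi> z" using Phi_lb by blast
  obtain \<nu>0 where \<nu>0: "\<nu>0 > 0" "\<And>d. \<nu>0 * (norm d)\<^sup>2 \<le> Q d" using Q_pd by blast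
  have "eventually (\<lambda>z. C + 1 \<le> \<Phi> z) at_infinity"
    using Phi_coer unfolding coercive_def filterlim_at_top by blast
  then obtain R1 where R1: "\<And>z. R1 \<le> norm z \<Longrightarrow> C + 1 \<le> \<Phi> z" unfolding eventually_at_infinity by blast
  define T where "T = \<mu> * (max R1 0 + norm y)\<^sup>2 + 2 * (C - m)"
  have "norm x \<le> sqrt (T / \<nu>0)" if x: "FF x \<le> C" for x
  proof -
    have ps: "0 \<le> (\<Sum>s\<in>UNIV. \<psi> s \<delta> (norm (Ms s *v x - cs s)))"
      using psi_cont[OF delta_pos] by (intro sum_nonneg) auto
    have a: "\<Phi> (H *v x - y) + (norm (V0 *v x))\<^sup>2 \<le> C" using x ps unfolding FF_eq by simp
    then have "\<Phi> (H *v x - y) < C + 1" by (smt (verit) zero_le_power2)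
    then have "norm (H *v x - y) < R1" using R1[of "H *v x - y"] by linarith
    then have "norm (H *v x) \<le> max R1 0 + norm y" using norm_triangle_ineq2[of "H *v x" y] by simp
    then have h: "(norm (H *v x))\<^sup>2 \<le> (max R1 0 + norm y)\<^sup>2" by (simp add: power_mono)
    have v: "(norm (V0 *v x))\<^sup>2 \<le> C - m" using a m[of "H *v x - y"] by simp
    have "\<nu>0 * (norm x)\<^sup>2 \<le> Q x" by (rule \<nu>0(2))
    also have "\<dots> \<le> T" unfolding Q_def T_def using h v mu_pos by (smt (verit) mult_left_mono)
    finally have "(norm x)\<^sup>2 \<le> T / \<nu>0" using \<nu>0(1) by (simp add: field_simps)
    then show ?thesis by (rule real_le_rsqrt)
  qed
  then show ?thesis unfolding bounded_iff by blast
qed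

end



theorem theorem3:
  fixes H :: "real^'n^'q" and y :: "real^'q" and V0 :: "real^'n^'r"
    and grp :: "'p::finite \<Rightarrow> 's::finite" and V :: "real^'n^'p" and c :: "real^'p"
    and \<Phi> :: "real^'q \<Rightarrow> real" and \<psi> :: "'s \<Rightarrow> real \<Rightarrow> real \<Rightarrow> real"
    and \<delta> L \<mu> :: real and J :: nat and \<omega>bar :: "'s \<Rightarrow> real"
    and x :: "nat \<Rightarrow> real^'n" and D :: "nat \<Rightarrow> real^'m^'n"
    and u :: "nat \<Rightarrow> nat \<Rightarrow> real^'m" and j1 :: 'm
  defines "F \<equiv> Fdelta \<Phi> H y V0 grp V c \<psi> \<delta>"
  defines "A \<equiv> Amat \<mu> H V0 grp V c \<psi> \<delta>"
  assumes MN: "CARD('m) \<le> CARD('n)"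
    and J: "J \<ge> 1"
    and H_nz: "H \<noteq> 0"
    and blocks_nonempty: "surj grp"
    \<comment> \<open>(A1)\<close>
    and A1i: "continuous_on UNIV \<Phi>" "coercive \<Phi>"
    and A1ii: "\<And>s d. d > 0 \<Longrightarrow> continuous_on UNIV (\<psi> s d) \<and> (\<forall>t. \<psi> s d t \<ge> 0)"
    and A1iii: "\<And>z. H *v z = 0 \<Longrightarrow> V0 *v z = 0 \<Longrightarrow> z = 0"
    \<comment> \<open>(A3) for the fixed delta\<close>
    and delta_pos: "\<delta> > 0"
    and A3i: "\<And>z. GDERIV \<Phi> z :> grad \<Phi> z"
      "\<And>z w. norm (grad \<Phi> z - grad \<Phi> w) \<le> L * norm (z - w)"
    and A3ii: "\<And>s t. \<psi> s \<delta> differentiable (at t)"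
    and A3iii: "\<And>s. concave_on {0..} (\<lambda>t. \<psi> s \<delta> (sqrt t))"
    and A3iv: "\<And>s. \<omega>bar s \<ge> 0"
      "\<And>s t. t > 0 \<Longrightarrow> 0 \<le> deriv (\<psi> s \<delta>) t \<and> deriv (\<psi> s \<delta>) t \<le> \<omega>bar s * t"
      "\<And>s. \<exists>l::real. ((\<lambda>t. deriv (\<psi> s \<delta>) t / t) \<longlongrightarrow> l) (at 0)"
    and KL: "KL F"
    and mu: "\<mu> \<ge> L"
    \<comment> \<open>MM subspace iteration\<close>
    and u0: "\<And>k. u k 0 = 0"
    and uj: "\<And>k j. 1 \<le> j \<Longrightarrow> j \<le> J \<Longrightarrow>
       u k j = u k (j - 1)
         - pinv (transpose (D k) ** A (x k + D k *v u k (j - 1)) ** D k)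
             *v (transpose (D k) *v grad F (x k + D k *v u k (j - 1)))"
    and xstep: "\<And>k. x (Suc k) = x k + D k *v u k J"
    \<comment> \<open>(A4), j1 indexes the first column of D k\<close>
    and A4: "\<exists>\<gamma>0>0. \<exists>\<gamma>1>0. \<forall>k.
       grad F (x k) \<bullet> column j1 (D k) \<le> - \<gamma>0 * (norm (grad F (x k)))\<^sup>2 \<and>
       norm (column j1 (D k)) \<le> \<gamma>1 * norm (grad F (x k))"
  shows "\<exists>xt. x \<longlonglongrightarrow> xt \<and> grad F xt = 0 \<and> summable (\<lambda>k. norm (x (Suc k) - x k))"
proof -
  have C: "conc H V0 \<Phi> \<psi> \<delta> L \<mu> \<omega>bar"
    unfolding conc_def using A1i A1ii A1iii delta_pos A3i A3ii A3iii A3iv(2,3) mu by blast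
  interpret conc where H = H and y = y and V0 = V0 and grp = grp and V = V and c = c and \<Phi> = \<Phi>
    and \<psi> = \<psi> and \<delta> = \<delta> and L = L and \<mu> = \<mu> and \<omega>b = \<omega>bar by (rule C)
  have FF: "F = FF" unfolding F_def FF_def ..
  have AA: "A = AA" unfolding A_def AA_def ..
  obtain \<nu> where \<nu>: "\<nu> > 0" "\<And>x d. \<nu> * (norm d)\<^sup>2 \<le> d \<bullet> (AA x *v d)" using AA_low by blast
  obtain \<nu>b where \<nu>b: "\<And>x d. d \<bullet> (AA x *v d) \<le> \<nu>b * (norm d)\<^sup>2" using AA_up by blast
  have KLG: "\<exists>\<kappa>>0. \<exists>\<zeta>>0. \<exists>\<theta>. 0 \<le> \<theta> \<and> \<theta> < 1 \<and>
        (\<forall>x\<in>E. \<bar>FF x - FF xt\<bar> < \<zeta> \<longrightarrow> norm (GG x) \<ge> \<kappa> * \<bar>FF x - FF xt\<bar> powr \<theta>)"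
    if "bounded E" "\<exists>U. open U \<and> xt \<in> U \<and> U \<subseteq> E" for xt E
    using KL that unfolding KL_def FF grad_FF by blast
  interpret M: mm2 FF GG AA \<nu> \<nu>b
    apply unfold_locales
            apply (rule FF_major)
           apply (simp add: AA_def Amat_sym)
          apply (rule \<nu>(1))
         apply (rule \<nu>(2))
        apply (rule \<nu>b)
       apply (rule GG_deriv)
      apply (rule FF_cont)
     apply (rule FF_lev)
    apply (rule KLG; assumption)
    done
  have uj': "\<And>k j. 1 \<le> j \<Longrightarrow> j \<le> J \<Longrightarrow>
       u k j = u k (j - 1)
         - pinv (transpose (D k) ** AA (x k + D k *v u k (j - 1)) ** D k)
             *v (transpose (D k) *v GG (x k + D k *v u k (j - 1)))"
    using uj unfolding FF AA grad_FF .
  have A4': "\<exists>\<gamma>0>0. \<exists>\<gamma>1>0. \<forall>k.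
       GG (x k) \<bullet> column j1 (D k) \<le> - \<gamma>0 * (norm (GG (x k)))\<^sup>2 \<and>
       norm (column j1 (D k)) \<le> \<gamma>1 * norm (GG (x k))"
    using A4 unfolding FF grad_FF .
  obtain xt where "x \<longlonglongrightarrow> xt" "GG xt = 0" "summable (\<lambda>k. norm (x (Suc k) - x k))"
    using M.converge[OF J u0 uj' xstep A4'] by blast
  then show ?thesis unfolding FF grad_FF by blast
qed



end
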